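(* Consider a qubit chain with sites indexed by $\mathbb{Z}$ and the Floquet unitary $U=\prod_{i\ \mathrm{odd}}C_{i,i+1}\prod_{i\ \mathrm{even}}C_{i,i+1}$, where each $C_{i,i+1}$ is a two-qubit Clifford gate on sites $(i,i+1)$ that is not in the product class. Let $k\ge1$, $a\in\mathbb{Z}$, and suppose $U$ has an irreducible left $k$-wall around $C=\{a+1,\dots,a+k\}$. Then the first gate $C_{a,a+1}$ and the last gate $C_{a+k,a+k+1}$ of the wall both belong to the $\mathrm{CZ}$-class.
   Context: Two-qubit Clifford gates fall into four classes under $C\mapsto(a_1\otimes a_2)C(a_3\otimes a_4)$ with $a_i$ single-qubit Cliffords (up to global phase): the product class (gates of the form $a\otimes b$), the $\mathrm{CZ}$-class $\{(a_1\otimes a_2)\,\mathrm{CZ}\,(a_3\otimes a_4)\}$ with $\mathrm{CZ}=\mathrm{diag}(1,1,1,-1)$, the $\mathrm{SWAP}$-class $\{(a_1\otimes a_2)\,\mathrm{SWAP}\,(a_3\otimes a_4)\}$, and the $\mathrm{FSWAP}$-class $\{(a_1\otimes a_2)\,\mathrm{CZ}\cdot\mathrm{SWAP}\,(a_3\otimes a_4)\}$. For integers $b\le c$, set $L_b=\{i\le b\}$, $C_{b,c}=\{b+1,\dots,c\}$ (empty if $b=c$), $R_c=\{i>c\}$. $U$ satisfies the left wall condition for $(b,c)$ if for every finitely supported Pauli string $P$ supported in $L_b$ and every integer $t\ge1$, $U^tPU^{-t}$ acts as the identity on every site of $R_c$. $U$ has an irreducible left $k$-wall around $\{a+1,\dots,a+k\}$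 if it satisfies the left wall condition for $(a,a+k)$ but not for any $(b,c)$ with $a\le b\le c\le a+k$ and $(b,c)\ne(a,a+k)$. *)

theory Defs
  imports Complex_Main
begin

text \<open>Basis state False = |0>, True = |1>. A two-qubit index (x,y) means |x>|y>,
  first component = left site.\<close>

type_synonym mat1 = "bool \<Rightarrow> bool \<Rightarrow> complex"
type_synonym mat2 = "bool \<times> bool \<Rightarrow> bool \<times> bool \<Rightarrow> complex"

definition mul1 :: "mat1 \<Rightarrow> mat1 \<Rightarrow> mat1" where
  "mul1 A B = (\<lambda>i k. \<Sum>j\<in>UNIV. A i j * B j k)"
definition mul2 :: "mat2 \<Rightarrow> mat2 \<Rightarrow> mat2" where
  "mul2 A B = (\<lambda>i k. \<Sum>j\<in>UNIV. A i j * B j k)"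
definition adj1 :: "mat1 \<Rightarrow> mat1" where
  "adj1 A = (\<lambda>i j. cnj (A j i))"
definition adj2 :: "mat2 \<Rightarrow> mat2" where
  "adj2 A = (\<lambda>i j. cnj (A j i))"
definition id1 :: mat1 where
  "id1 = (\<lambda>i j. if i = j then 1 else 0)"
definition id2 :: mat2 where
  "id2 = (\<lambda>i j. if i = j then 1 else 0)"
definition smult1 :: "complex \<Rightarrow> mat1 \<Rightarrow> mat1" where
  "smult1 c A = (\<lambda>i j. c * A i j)"
definition smult2 :: "complex \<Rightarrow> mat2 \<Rightarrow> mat2" where
  "smult2 c A = (\<lambda>i j. c * A i j)"

definition tensor :: "mat1 \<Rightarrow> mat1 \<Rightarrow> mat2" where
  "tensor A B = (\<lambda>(i,j) (k,l). A i k * B j l)"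

definition unitary1 :: "mat1 \<Rightarrow> bool" where
  "unitary1 A \<longleftrightarrow> mul1 A (adj1 A) = id1 \<and> mul1 (adj1 A) A = id1"
definition unitary2 :: "mat2 \<Rightarrow> bool" where
  "unitary2 A \<longleftrightarrow> mul2 A (adj2 A) = id2 \<and> mul2 (adj2 A) A = id2"

datatype pauli = PI | PX | PY | PZ

definition pmat :: "pauli \<Rightarrow> mat1" where
  "pmat p = (case p of
      PI \<Rightarrow> id1
    | PX \<Rightarrow> (\<lambda>i j. if i \<noteq> j then 1 else 0)
    | PY \<Rightarrow> (\<lambda>i j. if i = j then 0 else if j then - \<i> else \<i>)
    | PZ \<Rightarrow> (\<lambda>i j. if i \<noteq> j then 0 else if i then -1 else 1))"

definition clifford1 :: "mat1 \<Rightarrow> bool" where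
  "clifford1 A \<longleftrightarrow> unitary1 A \<and>
     (\<forall>p. \<exists>c q. mul1 (mul1 A (pmat p)) (adj1 A) = smult1 c (pmat q))"

definition clifford2 :: "mat2 \<Rightarrow> bool" where
  "clifford2 C \<longleftrightarrow> unitary2 C \<and>
     (\<forall>p q. \<exists>c p' q'. mul2 (mul2 C (tensor (pmat p) (pmat q))) (adj2 C)
                      = smult2 c (tensor (pmat p') (pmat q')))"

definition CZ :: mat2 where
  "CZ = (\<lambda>i j. if i = j then (if fst i \<and> snd i then -1 else 1) else 0)"

definition SWAP :: mat2 where
  "SWAP = (\<lambda>(x,y) j. if j = (y,x) then 1 else 0)"

text \<open>Classes are taken up to global phase.\<close>
definition product_class :: "mat2 \<Rightarrow> bool" where
  "product_class C \<longleftrightarrow> (\<exists>a b c. clifford1 a \<and> clifford1 b \<and> C = smult2 c (tensor a b))"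

definition gate_class :: "mat2 \<Rightarrow> mat2 \<Rightarrow> bool" where
  "gate_class G C \<longleftrightarrow> (\<exists>a1 a2 a3 a4 c. clifford1 a1 \<and> clifford1 a2 \<and> clifford1 a3 \<and> clifford1 a4
      \<and> C = smult2 c (mul2 (mul2 (tensor a1 a2) G) (tensor a3 a4)))"

definition CZ_class :: "mat2 \<Rightarrow> bool" where
  "CZ_class C \<longleftrightarrow> gate_class CZ C"

definition gate_act :: "mat2 \<Rightarrow> pauli \<times> pauli \<Rightarrow> pauli \<times> pauli" where
  "gate_act C pq = (THE r. \<exists>c.
      mul2 (mul2 C (tensor (pmat (fst pq)) (pmat (snd pq)))) (adj2 C)
        = smult2 c (tensor (pmat (fst r)) (pmat (snd r))))"

text \<open>A Pauli string (modulo phase) on the chain indexed by int; \<open>G i\<close> is the gate on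
  sites (i, i+1).\<close>
definition layer :: "int \<Rightarrow> (int \<Rightarrow> mat2) \<Rightarrow> (int \<Rightarrow> pauli) \<Rightarrow> (int \<Rightarrow> pauli)" where
  "layer par G P = (\<lambda>j. let i = (if even (j - par) then j else j - 1);
                          r = gate_act (G i) (P i, P (i + 1))
                      in if j = i then fst r else snd r)"

text \<open>\<open>U = (\<Prod>odd C) (\<Prod>even C)\<close>; conjugation \<open>U P U\<^sup>-\<^sup>1\<close> applies the even layer first.\<close>
definition Ustep :: "(int \<Rightarrow> mat2) \<Rightarrow> (int \<Rightarrow> pauli) \<Rightarrow> (int \<Rightarrow> pauli)" where
  "Ustep G P = layer 1 G (layer 0 G P)"

definition left_wall :: "(int \<Rightarrow> mat2) \<Rightarrow> int \<Rightarrow> int \<Rightarrow> bool" where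
  "left_wall G b c \<longleftrightarrow>
     (\<forall>P. finite {i. P i \<noteq> PI} \<longrightarrow> (\<forall>i. P i \<noteq> PI \<longrightarrow> i \<le> b) \<longrightarrow>
        (\<forall>t::nat. t \<ge> 1 \<longrightarrow> (\<forall>j. j > c \<longrightarrow> (Ustep G ^^ t) P j = PI)))"

definition irreducible_left_wall :: "(int \<Rightarrow> mat2) \<Rightarrow> int \<Rightarrow> nat \<Rightarrow> bool" where
  "irreducible_left_wall G a k \<longleftrightarrow> left_wall G a (a + int k) \<and>
     (\<forall>b c. a \<le> b \<longrightarrow> b \<le> c \<longrightarrow> c \<le> a + int k \<longrightarrow> (b, c) \<noteq> (a, a + int k) \<longrightarrow>
        \<not> left_wall G b c)"

end

theory Submission
  imports Defs
begin

lemma UNIV_bb: "(UNIV :: (bool \<times> bool) set) = {(False,False),(False,True),(True,False),(True,True)}"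
  by auto
lemma sum_bb: "(\<Sum>j\<in>(UNIV::(bool\<times>bool) set). f j) = f (False,False) + f (False,True) + f (True,False) + f (True,True)"
  for f :: "bool\<times>bool \<Rightarrow> 'a::comm_monoid_add"
  by (simp add: UNIV_bb add.assoc)
lemma sum_b: "(\<Sum>j\<in>(UNIV::bool set). f j) = f False + f True"
  for f :: "bool \<Rightarrow> 'a::comm_monoid_add"
  by (simp add: UNIV_bool add.commute)

lemma mul1_assoc: "mul1 (mul1 A B) C = mul1 A (mul1 B C)"
  by (simp add: fun_eq_iff mul1_def sum_b algebra_simps)
lemma mul2_assoc: "mul2 (mul2 A B) C = mul2 A (mul2 B C)"
  by (simp add: fun_eq_iff mul2_def sum_bb algebra_simps)
lemma mul1_id[simp]: "mul1 id1 A = A" "mul1 A id1 = A"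
  by (simp_all add: fun_eq_iff mul1_def sum_b id1_def)
lemma mul2_id[simp]: "mul2 id2 A = A" "mul2 A id2 = A"
  by (auto simp add: fun_eq_iff mul2_def sum_bb id2_def)
lemma mul2_smult[simp]: "mul2 A (smult2 c B) = smult2 c (mul2 A B)" "mul2 (smult2 c B) A = smult2 c (mul2 B A)"
  by (simp_all add: fun_eq_iff mul2_def smult2_def sum_bb algebra_simps)
lemma mul1_smult[simp]: "mul1 A (smult1 c B) = smult1 c (mul1 A B)" "mul1 (smult1 c B) A = smult1 c (mul1 B A)"
  by (simp_all add: fun_eq_iff mul1_def smult1_def sum_b algebra_simps)
lemma smult2_smult2[simp]: "smult2 c (smult2 d A) = smult2 (c*d) A"
  by (simp add: fun_eq_iff smult2_def)
lemma smult1_smult1[simp]: "smult1 c (smult1 d A) = smult1 (c*d) A"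
  by (simp add: fun_eq_iff smult1_def)
lemma smult2_1[simp]: "smult2 1 A = A" by (simp add: fun_eq_iff smult2_def)
lemma smult1_1[simp]: "smult1 1 A = A" by (simp add: fun_eq_iff smult1_def)
lemma adj2_mul: "adj2 (mul2 A B) = mul2 (adj2 B) (adj2 A)"
  by (simp add: fun_eq_iff mul2_def adj2_def sum_bb algebra_simps)
lemma adj1_mul: "adj1 (mul1 A B) = mul1 (adj1 B) (adj1 A)"
  by (simp add: fun_eq_iff mul1_def adj1_def sum_b algebra_simps)
lemma adj2_adj2[simp]: "adj2 (adj2 A) = A" by (simp add: fun_eq_iff adj2_def)
lemma adj1_adj1[simp]: "adj1 (adj1 A) = A" by (simp add: fun_eq_iff adj1_def)
lemma adj2_smult[simp]: "adj2 (smult2 c A) = smult2 (cnj c) (adj2 A)"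
  by (simp add: fun_eq_iff adj2_def smult2_def)
lemma adj1_smult[simp]: "adj1 (smult1 c A) = smult1 (cnj c) (adj1 A)"
  by (simp add: fun_eq_iff adj1_def smult1_def)

lemma tensor_mul: "mul2 (tensor A B) (tensor C D) = tensor (mul1 A C) (mul1 B D)"
  by (simp add: fun_eq_iff mul2_def tensor_def mul1_def sum_bb sum_b algebra_simps split: prod.split)
lemma tensor_adj: "adj2 (tensor A B) = tensor (adj1 A) (adj1 B)"
  by (simp add: fun_eq_iff adj2_def tensor_def adj1_def split: prod.split)
lemma tensor_smult: "tensor (smult1 c A) (smult1 d B) = smult2 (c*d) (tensor A B)"
  by (simp add: fun_eq_iff smult2_def tensor_def smult1_def split: prod.split)
lemma tensor_id: "tensor id1 id1 = id2"
  by (auto simp add: fun_eq_iff id2_def tensor_def id1_def split: prod.split)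

fun pmul :: "pauli \<Rightarrow> pauli \<Rightarrow> pauli" where
  "pmul PI q = q"
| "pmul p PI = p"
| "pmul PX PX = PI" | "pmul PY PY = PI" | "pmul PZ PZ = PI"
| "pmul PX PY = PZ" | "pmul PY PX = PZ"
| "pmul PY PZ = PX" | "pmul PZ PY = PX"
| "pmul PZ PX = PY" | "pmul PX PZ = PY"

fun ph :: "pauli \<Rightarrow> pauli \<Rightarrow> complex" where
  "ph PX PY = \<i>" | "ph PY PZ = \<i>" | "ph PZ PX = \<i>"
| "ph PY PX = - \<i>" | "ph PZ PY = - \<i>" | "ph PX PZ = - \<i>"
| "ph _ _ = 1"

definition acomm :: "pauli \<Rightarrow> pauli \<Rightarrow> bool" where
  "acomm p q \<longleftrightarrow> p \<noteq> PI \<and> q \<noteq> PI \<and> p \<noteq> q"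

lemma pmul_simps[simp]: "pmul p PI = p" "pmul p p = PI"
  by (cases p; simp)+
lemma pmul_comm: "pmul p q = pmul q p" by (cases p; cases q; simp)
lemma pmul_assoc: "pmul (pmul p q) r = pmul p (pmul q r)" by (cases p; cases q; cases r; simp)
lemma pmul_cancel[simp]: "pmul (pmul p q) q = p" "pmul q (pmul q p) = p"
  by (cases p; cases q; simp)+
lemma pmul_eq_PI: "pmul p q = PI \<longleftrightarrow> p = q" by (cases p; cases q; simp)
lemma ph_nz[simp]: "ph p q \<noteq> 0" by (cases p; cases q; simp)

lemma pmat_mul: "mul1 (pmat p) (pmat q) = smult1 (ph p q) (pmat (pmul p q))"
  by (cases p; cases q; simp add: fun_eq_iff mul1_def pmat_def smult1_def sum_b id1_def)

lemma pmat_comm: "mul1 (pmat p) (pmat q) = smult1 (if acomm p q then -1 else 1) (mul1 (pmat q) (pmat p))"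
  by (cases p; cases q; simp add: acomm_def fun_eq_iff mul1_def pmat_def smult1_def sum_b id1_def)

lemma pmat_adj[simp]: "adj1 (pmat p) = pmat p"
  by (cases p; simp add: fun_eq_iff adj1_def pmat_def id1_def)

lemma pmat_PI: "pmat PI = id1" by (simp add: pmat_def)

definition ip1 :: "mat1 \<Rightarrow> mat1 \<Rightarrow> complex" where
  "ip1 A B = (\<Sum>i\<in>UNIV. \<Sum>j\<in>UNIV. cnj (A i j) * B i j)"
definition ip2 :: "mat2 \<Rightarrow> mat2 \<Rightarrow> complex" where
  "ip2 A B = (\<Sum>i\<in>UNIV. \<Sum>j\<in>UNIV. cnj (A i j) * B i j)"

lemma ip1_pmat: "ip1 (pmat p) (pmat q) = (if p = q then 2 else 0)"
  by (cases p; cases q; simp add: ip1_def pmat_def sum_b id1_def)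

lemma ip2_tensor: "ip2 (tensor A B) (tensor C D) = ip1 A C * ip1 B D"
  by (simp add: ip2_def ip1_def tensor_def sum_bb sum_b algebra_simps)

lemma ip2_smult: "ip2 A (smult2 c B) = c * ip2 A B"
  by (simp add: ip2_def smult2_def sum_bb algebra_simps)

definition PT :: "pauli \<times> pauli \<Rightarrow> mat2" where
  "PT r = tensor (pmat (fst r)) (pmat (snd r))"

lemma ip2_PT: "ip2 (PT r) (PT s) = (if r = s then 4 else 0)"
  by (cases r; cases s; simp add: PT_def ip2_tensor ip1_pmat)

lemma PT_indep:
  assumes "smult2 c (PT r) = smult2 d (PT s)" "c \<noteq> 0"
  shows "r = s \<and> c = d"
proof -
  have "ip2 (PT r) (smult2 c (PT r)) = ip2 (PT r) (smult2 d (PT s))" using assms by simp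
  hence "c * 4 = d * (if r = s then 4 else 0)" by (simp add: ip2_smult ip2_PT)
  with assms(2) show ?thesis by (auto split: if_splits)
qed

lemma PT_nz: "PT r \<noteq> smult2 0 A"
proof
  assume "PT r = smult2 0 A"
  hence "ip2 (PT r) (PT r) = ip2 (PT r) (smult2 0 A)" by simp
  thus False by (simp add: ip2_smult ip2_PT)
qed

lemma PT_II: "PT (PI,PI) = id2" by (simp add: PT_def pmat_PI tensor_id)

definition ppmul :: "pauli \<times> pauli \<Rightarrow> pauli \<times> pauli \<Rightarrow> pauli \<times> pauli" where
  "ppmul r s = (pmul (fst r) (fst s), pmul (snd r) (snd s))"

definition acomm2 :: "pauli \<times> pauli \<Rightarrow> pauli \<times> pauli \<Rightarrow> bool" where
  "acomm2 r s \<longleftrightarrow> (acomm (fst r) (fst s) \<noteq> acomm (snd r) (snd s))"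

lemma PT_mul: "mul2 (PT r) (PT s) = smult2 (ph (fst r) (fst s) * ph (snd r) (snd s)) (PT (ppmul r s))"
  by (simp add: PT_def tensor_mul pmat_mul tensor_smult ppmul_def)

lemma PT_comm: "mul2 (PT r) (PT s) = smult2 (if acomm2 r s then -1 else 1) (mul2 (PT s) (PT r))"
proof -
  have "mul2 (PT r) (PT s) = tensor (mul1 (pmat (fst r)) (pmat (fst s))) (mul1 (pmat (snd r)) (pmat (snd s)))"
    by (simp add: PT_def tensor_mul)
  also have "\<dots> = smult2 ((if acomm (fst r) (fst s) then -1 else 1) * (if acomm (snd r) (snd s) then -1 else 1))
       (tensor (mul1 (pmat (fst s)) (pmat (fst r))) (mul1 (pmat (snd s)) (pmat (snd r))))"
    by (subst pmat_comm, subst (2) pmat_comm, simp add: tensor_smult)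
  also have "\<dots> = smult2 (if acomm2 r s then -1 else 1) (mul2 (PT s) (PT r))"
    by (simp add: PT_def tensor_mul acomm2_def)
  finally show ?thesis .
qed

lemma PT_adj[simp]: "adj2 (PT r) = PT r" by (simp add: PT_def tensor_adj)
lemma PT_sq: "mul2 (PT r) (PT r) = id2"
  by (simp add: PT_mul ppmul_def PT_II[symmetric]) (cases "fst r"; cases "snd r"; simp)

definition conj2 :: "mat2 \<Rightarrow> mat2 \<Rightarrow> mat2" where
  "conj2 C M = mul2 (mul2 C M) (adj2 C)"
definition conj1 :: "mat1 \<Rightarrow> mat1 \<Rightarrow> mat1" where
  "conj1 C M = mul1 (mul1 C M) (adj1 C)"

lemma conj2_back: "unitary2 C \<Longrightarrow> mul2 (mul2 (adj2 C) (conj2 C M)) C = M"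
  unfolding conj2_def unitary2_def by (simp add: mul2_assoc[symmetric]) (simp add: mul2_assoc)

lemma conj2_mul: "unitary2 C \<Longrightarrow> conj2 C (mul2 M N) = mul2 (conj2 C M) (conj2 C N)"
  unfolding conj2_def unitary2_def
  by (metis mul2_assoc mul2_id(2))

lemma conj2_smult[simp]: "conj2 C (smult2 c M) = smult2 c (conj2 C M)"
  by (simp add: conj2_def)

lemma conj2_id: "unitary2 C \<Longrightarrow> conj2 C id2 = id2"
  by (simp add: conj2_def unitary2_def)

lemma smult2_0_eq: "smult2 0 A = smult2 0 B" by (simp add: smult2_def)

lemma ga_char:
  assumes "clifford2 C"
  shows "\<exists>c. c \<noteq> 0 \<and> conj2 C (PT r) = smult2 c (PT (gate_act C r))"
proof -
  from assms obtain c p' q' where e: "conj2 C (PT r) = smult2 c (PT (p',q'))"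
    unfolding clifford2_def conj2_def PT_def by (metis fst_conv snd_conv)
  have u: "unitary2 C" using assms clifford2_def by blast
  have c0: "c \<noteq> 0"
  proof
    assume "c = 0"
    hence "PT r = mul2 (mul2 (adj2 C) (smult2 0 (PT (p',q')))) C" using conj2_back[OF u, of "PT r"] e by simp
    hence "PT r = smult2 0 (mul2 (mul2 (adj2 C) (PT (p',q'))) C)" by simp
    thus False using PT_nz by blast
  qed
  have "gate_act C r = (p',q')"
    unfolding gate_act_def
  proof (rule the_equality)
    show "\<exists>c. mul2 (mul2 C (tensor (pmat (fst r)) (pmat (snd r)))) (adj2 C) =
        smult2 c (tensor (pmat (fst (p', q'))) (pmat (snd (p', q'))))"
      using e unfolding conj2_def PT_def by auto
  next
    fix s assume "\<exists>d. mul2 (mul2 C (tensor (pmat (fst r)) (pmat (snd r)))) (adj2 C) =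
        smult2 d (tensor (pmat (fst s)) (pmat (snd s)))"
    then obtain d where "conj2 C (PT r) = smult2 d (PT s)" unfolding conj2_def PT_def by auto
    with e have "smult2 c (PT (p',q')) = smult2 d (PT s)" by simp
    thus "s = (p',q')" using PT_indep c0 by metis
  qed
  thus ?thesis using e c0 by auto
qed

lemma ga_unique:
  assumes "clifford2 C" "conj2 C (PT r) = smult2 c (PT s)"
  shows "gate_act C r = s"
proof -
  obtain c' where "c' \<noteq> 0" "conj2 C (PT r) = smult2 c' (PT (gate_act C r))" using ga_char[OF assms(1)] by blast
  thus ?thesis using assms(2) PT_indep by metis
qed

lemma cl_unitary: "clifford2 C \<Longrightarrow> unitary2 C" by (simp add: clifford2_def)

lemma ga_II: "clifford2 C \<Longrightarrow> gate_act C (PI,PI) = (PI,PI)"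
  by (rule ga_unique[where c=1]) (auto simp: PT_II conj2_id cl_unitary)

lemma ga_hom: assumes "clifford2 C"
  shows "gate_act C (ppmul r s) = ppmul (gate_act C r) (gate_act C s)"
proof -
  have u: "unitary2 C" using assms cl_unitary by blast
  obtain a where a: "a \<noteq> 0" "conj2 C (PT r) = smult2 a (PT (gate_act C r))" using ga_char[OF assms] by blast
  obtain b where b: "b \<noteq> 0" "conj2 C (PT s) = smult2 b (PT (gate_act C s))" using ga_char[OF assms] by blast
  define \<phi> where "\<phi> = ph (fst r) (fst s) * ph (snd r) (snd s)"
  define \<psi> where "\<psi> = ph (fst (gate_act C r)) (fst (gate_act C s)) * ph (snd (gate_act C r)) (snd (gate_act C s))"
  have p0: "\<phi> \<noteq> 0" by (simp add: \<phi>_def)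
  have "smult2 \<phi> (conj2 C (PT (ppmul r s))) = conj2 C (mul2 (PT r) (PT s))"
    by (simp add: PT_mul \<phi>_def)
  also have "\<dots> = smult2 (a*b*\<psi>) (PT (ppmul (gate_act C r) (gate_act C s)))"
    by (simp only: conj2_mul[OF u] a b mul2_smult smult2_smult2) (simp add: PT_mul \<psi>_def algebra_simps)
  finally have "smult2 (1/\<phi>) (smult2 \<phi> (conj2 C (PT (ppmul r s)))) = smult2 (1/\<phi>) (smult2 (a*b*\<psi>) (PT (ppmul (gate_act C r) (gate_act C s))))"
    by simp
  hence "conj2 C (PT (ppmul r s)) = smult2 (a*b*\<psi>/\<phi>) (PT (ppmul (gate_act C r) (gate_act C s)))"
    using p0 by simp
  thus ?thesis using ga_unique[OF assms] by blast
qed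

lemma ppmul_self[simp]: "ppmul r r = (PI,PI)" by (simp add: ppmul_def)
lemma ppmul_eq_II: "ppmul r s = (PI,PI) \<longleftrightarrow> r = s"
  by (cases r; cases s; simp add: ppmul_def pmul_eq_PI)

lemma ga_zero: assumes "clifford2 C" "gate_act C r = (PI,PI)" shows "r = (PI,PI)"
proof -
  have u: "unitary2 C" using assms cl_unitary by blast
  obtain a where a: "a \<noteq> 0" "conj2 C (PT r) = smult2 a (PT (PI,PI))" using ga_char[OF assms(1)] assms(2) by metis
  have "PT r = mul2 (mul2 (adj2 C) (conj2 C (PT r))) C" using conj2_back[OF u] by simp
  also have "\<dots> = smult2 a (PT (PI,PI))" using a u by (simp add: PT_II unitary2_def)
  finally have "smult2 1 (PT r) = smult2 a (PT (PI,PI))" by simp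
  thus ?thesis using PT_indep by (metis one_neq_zero)
qed

lemma ga_inj: assumes "clifford2 C" shows "inj (gate_act C)"
proof (rule injI)
  fix r s assume "gate_act C r = gate_act C s"
  hence "gate_act C (ppmul r s) = (PI,PI)" using ga_hom[OF assms] by simp
  thus "r = s" using ga_zero[OF assms] ppmul_eq_II by blast
qed

lemma UNIV_pauli: "(UNIV :: pauli set) = {PI,PX,PY,PZ}"
  by (auto intro: pauli.exhaust)
lemma finite_pauli[simp]: "finite (UNIV :: pauli set)" by (simp add: UNIV_pauli)
lemma finite_pp[simp]: "finite (UNIV :: (pauli \<times> pauli) set)"
  by (metis finite_pauli finite_cartesian_product UNIV_Times_UNIV)

lemma ga_surj: "clifford2 C \<Longrightarrow> surj (gate_act C)"
  using finite_UNIV_inj_surj[OF finite_pp ga_inj] by blast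

lemma ga_acomm: assumes "clifford2 C"
  shows "acomm2 (gate_act C r) (gate_act C s) = acomm2 r s"
proof -
  have u: "unitary2 C" using assms cl_unitary by blast
  obtain a where a: "a \<noteq> 0" "conj2 C (PT r) = smult2 a (PT (gate_act C r))" using ga_char[OF assms] by blast
  obtain b where b: "b \<noteq> 0" "conj2 C (PT s) = smult2 b (PT (gate_act C s))" using ga_char[OF assms] by blast
  define e where "e = (if acomm2 r s then -1 else 1::complex)"
  define e' where "e' = (if acomm2 (gate_act C r) (gate_act C s) then -1 else 1::complex)"
  define x where "x = ppmul (gate_act C s) (gate_act C r)"
  define \<psi> where "\<psi> = ph (fst (gate_act C s)) (fst (gate_act C r)) * ph (snd (gate_act C s)) (snd (gate_act C r))"
  have "conj2 C (mul2 (PT r) (PT s)) = smult2 (a*b*e') (mul2 (PT (gate_act C s)) (PT (gate_act C r)))"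
    by (simp only: conj2_mul[OF u] a b mul2_smult smult2_smult2 e'_def PT_comm[of "gate_act C r"]) (simp add: algebra_simps)
  moreover have "conj2 C (mul2 (PT r) (PT s)) = smult2 (a*b*e) (mul2 (PT (gate_act C s)) (PT (gate_act C r)))"
    apply (subst PT_comm[of r])
    by (simp only: conj2_smult e_def conj2_mul[OF u] a b mul2_smult smult2_smult2) (simp add: algebra_simps)
  ultimately have "smult2 (a*b*e'*\<psi>) (PT x) = smult2 (a*b*e*\<psi>) (PT x)"
    by (simp only: PT_mul x_def \<psi>_def smult2_smult2 mult.assoc)
  moreover have "a*b*e'*\<psi> \<noteq> 0" using a b by (simp add: e'_def \<psi>_def)
  ultimately have "a*b*e'*\<psi> = a*b*e*\<psi>" using PT_indep by blast
  hence "e' = e" using a b by (simp add: \<psi>_def)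
  thus ?thesis by (simp add: e_def e'_def split: if_splits)
qed

lemma cl_mul:
  assumes "clifford2 A" "clifford2 B"
  shows "clifford2 (mul2 A B) \<and> gate_act (mul2 A B) = gate_act A \<circ> gate_act B"
proof -
  have uA: "unitary2 A" and uB: "unitary2 B" using assms cl_unitary by auto
  have u: "unitary2 (mul2 A B)" using uA uB unfolding unitary2_def
    by (simp add: adj2_mul mul2_assoc) (simp add: mul2_assoc[symmetric])
  have cc: "conj2 (mul2 A B) M = conj2 A (conj2 B M)" for M
    by (simp add: conj2_def adj2_mul mul2_assoc)
  have e: "\<exists>c. conj2 (mul2 A B) (PT r) = smult2 c (PT (gate_act A (gate_act B r)))" for r
  proof -
    obtain c1 where 1: "conj2 B (PT r) = smult2 c1 (PT (gate_act B r))" using ga_char[OF assms(2), of r] by blast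
    obtain c2 where 2: "conj2 A (PT (gate_act B r)) = smult2 c2 (PT (gate_act A (gate_act B r)))"
      using ga_char[OF assms(1), of "gate_act B r"] by blast
    show ?thesis by (rule exI[of _ "c1*c2"]) (simp only: cc 1 2 conj2_smult smult2_smult2 mult.commute)
  qed
  have cl: "clifford2 (mul2 A B)"
    unfolding clifford2_def using u e unfolding conj2_def PT_def
    by (metis fst_conv snd_conv)
  moreover have "gate_act (mul2 A B) = gate_act A \<circ> gate_act B"
    using ga_unique[OF cl] e by (metis comp_apply ext)
  ultimately show ?thesis by blast
qed

definition act1 :: "mat1 \<Rightarrow> pauli \<Rightarrow> pauli" where
  "act1 a p = (THE q. \<exists>c. conj1 a (pmat p) = smult1 c (pmat q))"

lemma ip1_smult: "ip1 A (smult1 c B) = c * ip1 A B"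
  by (simp add: ip1_def smult1_def sum_b algebra_simps)

lemma pmat_indep:
  assumes "smult1 c (pmat p) = smult1 d (pmat q)" "c \<noteq> 0"
  shows "p = q \<and> c = d"
proof -
  have "ip1 (pmat p) (smult1 c (pmat p)) = ip1 (pmat p) (smult1 d (pmat q))" using assms by simp
  hence "c * 2 = d * (if p = q then 2 else 0)" by (simp add: ip1_smult ip1_pmat)
  with assms(2) show ?thesis by (auto split: if_splits)
qed

lemma pmat_nz: "pmat p \<noteq> smult1 0 A"
proof
  assume "pmat p = smult1 0 A"
  hence "ip1 (pmat p) (pmat p) = ip1 (pmat p) (smult1 0 A)" by simp
  thus False by (simp add: ip1_smult ip1_pmat)
qed

lemma conj1_back: "unitary1 C \<Longrightarrow> mul1 (mul1 (adj1 C) (conj1 C M)) C = M"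
  unfolding conj1_def unitary1_def by (simp add: mul1_assoc[symmetric]) (simp add: mul1_assoc)
lemma conj1_smult[simp]: "conj1 C (smult1 c M) = smult1 c (conj1 C M)"
  by (simp add: conj1_def)

lemma cl1_unitary: "clifford1 C \<Longrightarrow> unitary1 C" by (simp add: clifford1_def)

lemma cl1_char:
  assumes "clifford1 C"
  shows "\<exists>c. c \<noteq> 0 \<and> conj1 C (pmat p) = smult1 c (pmat (act1 C p))"
proof -
  from assms obtain c q where e: "conj1 C (pmat p) = smult1 c (pmat q)"
    unfolding clifford1_def conj1_def by blast
  have u: "unitary1 C" using assms cl1_unitary by blast
  have c0: "c \<noteq> 0"
  proof
    assume "c = 0"
    hence "pmat p = mul1 (mul1 (adj1 C) (smult1 0 (pmat q))) C" using conj1_back[OF u, of "pmat p"] e by simp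
    hence "pmat p = smult1 0 (mul1 (mul1 (adj1 C) (pmat q)) C)" by simp
    thus False using pmat_nz by blast
  qed
  have "act1 C p = q"
    unfolding act1_def
  proof (rule the_equality)
    show "\<exists>c. conj1 C (pmat p) = smult1 c (pmat q)" using e by auto
  next
    fix s assume "\<exists>d. conj1 C (pmat p) = smult1 d (pmat s)"
    then obtain d where "conj1 C (pmat p) = smult1 d (pmat s)" by auto
    with e have "smult1 c (pmat q) = smult1 d (pmat s)" by simp
    thus "s = q" using pmat_indep c0 by metis
  qed
  thus ?thesis using e c0 by auto
qed

lemma cl1_unique:
  assumes "clifford1 C" "conj1 C (pmat p) = smult1 c (pmat s)"
  shows "act1 C p = s"
proof -
  obtain c' where "c' \<noteq> 0" "conj1 C (pmat p) = smult1 c' (pmat (act1 C p))" using cl1_char[OF assms(1)] by blast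
  thus ?thesis using assms(2) pmat_indep by metis
qed

lemma cl1_mul:
  assumes "clifford1 A" "clifford1 B"
  shows "clifford1 (mul1 A B) \<and> act1 (mul1 A B) = act1 A \<circ> act1 B"
proof -
  have uA: "unitary1 A" and uB: "unitary1 B" using assms cl1_unitary by auto
  have u: "unitary1 (mul1 A B)" using uA uB unfolding unitary1_def
    by (simp add: adj1_mul mul1_assoc) (simp add: mul1_assoc[symmetric])
  have cc: "conj1 (mul1 A B) M = conj1 A (conj1 B M)" for M
    by (simp add: conj1_def adj1_mul mul1_assoc)
  have e: "\<exists>c. conj1 (mul1 A B) (pmat r) = smult1 c (pmat (act1 A (act1 B r)))" for r
  proof -
    obtain c1 where 1: "conj1 B (pmat r) = smult1 c1 (pmat (act1 B r))" using cl1_char[OF assms(2), of r] by blast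
    obtain c2 where 2: "conj1 A (pmat (act1 B r)) = smult1 c2 (pmat (act1 A (act1 B r)))"
      using cl1_char[OF assms(1), of "act1 B r"] by blast
    show ?thesis by (rule exI[of _ "c1*c2"]) (simp only: cc 1 2 conj1_smult smult1_smult1 mult.commute)
  qed
  have cl: "clifford1 (mul1 A B)"
    unfolding clifford1_def using u e unfolding conj1_def by blast
  moreover have "act1 (mul1 A B) = act1 A \<circ> act1 B"
    using cl1_unique[OF cl] e by (metis comp_apply ext)
  ultimately show ?thesis by blast
qed

lemma cl_tensor:
  assumes "clifford1 a" "clifford1 b"
  shows "clifford2 (tensor a b) \<and> gate_act (tensor a b) = (\<lambda>(p,q). (act1 a p, act1 b q))"
proof -
  have ua: "unitary1 a" and ub: "unitary1 b" using assms cl1_unitary by auto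
  have u: "unitary2 (tensor a b)" using ua ub unfolding unitary2_def unitary1_def
    by (simp add: tensor_adj tensor_mul tensor_id)
  have e: "\<exists>c. conj2 (tensor a b) (PT r) = smult2 c (PT (act1 a (fst r), act1 b (snd r)))" for r
  proof -
    obtain c1 where 1: "conj1 a (pmat (fst r)) = smult1 c1 (pmat (act1 a (fst r)))" using cl1_char[OF assms(1)] by blast
    obtain c2 where 2: "conj1 b (pmat (snd r)) = smult1 c2 (pmat (act1 b (snd r)))" using cl1_char[OF assms(2)] by blast
    have "conj2 (tensor a b) (PT r) = tensor (conj1 a (pmat (fst r))) (conj1 b (pmat (snd r)))"
      by (simp add: conj2_def conj1_def PT_def tensor_adj tensor_mul)
    thus ?thesis by (simp add: 1 2 tensor_smult PT_def) blast
  qed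
  have cl: "clifford2 (tensor a b)"
    unfolding clifford2_def using u e unfolding conj2_def PT_def
    by (metis fst_conv snd_conv)
  moreover have "gate_act (tensor a b) = (\<lambda>(p,q). (act1 a p, act1 b q))"
  proof (rule ext, clarify)
    fix p q
    obtain c where "conj2 (tensor a b) (PT (p,q)) = smult2 c (PT (act1 a p, act1 b q))" using e[of "(p,q)"] by auto
    thus "gate_act (tensor a b) (p, q) = (act1 a p, act1 b q)" using ga_unique[OF cl] by blast
  qed
  ultimately show ?thesis by blast
qed

lemma cl1_pmat: "clifford1 (pmat p)"
proof -
  have u: "unitary1 (pmat p)" unfolding unitary1_def
    by (simp add: pmat_mul pmat_PI[symmetric]) (cases p; simp)
  have "\<exists>c q. mul1 (mul1 (pmat p) (pmat r)) (adj1 (pmat p)) = smult1 c (pmat q)" for r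
    by (auto simp: pmat_mul pmat_PI[symmetric] mul1_assoc)
  thus ?thesis using u clifford1_def by blast
qed

lemma cl1_id: "clifford1 id1"
  using cl1_pmat[of PI] by (simp add: pmat_PI)

definition zif :: "pauli \<Rightarrow> pauli" where
  "zif p = (if p = PX \<or> p = PY then PZ else PI)"
definition czf :: "pauli \<times> pauli \<Rightarrow> pauli \<times> pauli" where
  "czf r = (pmul (fst r) (zif (snd r)), pmul (snd r) (zif (fst r)))"

lemma CZ_unitary: "unitary2 CZ"
  by (auto simp: unitary2_def fun_eq_iff mul2_def adj2_def CZ_def id2_def sum_bb)

lemma CZ_conj: "\<exists>c. conj2 CZ (PT r) = smult2 c (PT (czf r))"
proof (cases r)
  case (Pair p q)
  show ?thesis unfolding Pair
    by (rule exI[of _ "if (p,q) = (PX,PY) \<or> (p,q) = (PY,PX) then -1 else 1"],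
        cases p; cases q; simp add: fun_eq_iff conj2_def mul2_def adj2_def CZ_def smult2_def PT_def tensor_def
          pmat_def id1_def czf_def zif_def sum_bb split: prod.split)
qed

lemma CZ_cl: "clifford2 CZ \<and> gate_act CZ = czf"
proof -
  have cl: "clifford2 CZ" unfolding clifford2_def using CZ_unitary CZ_conj unfolding conj2_def PT_def
    by (metis fst_conv snd_conv)
  moreover have "gate_act CZ = czf"
  proof
    fix r obtain c where "conj2 CZ (PT r) = smult2 c (PT (czf r))" using CZ_conj by blast
    thus "gate_act CZ r = czf r" using ga_unique[OF cl] by blast
  qed
  ultimately show ?thesis by blast
qed

definition Sm :: mat1 where "Sm = (\<lambda>i j. if i \<noteq> j then 0 else if i then \<i> else 1)"
definition Hm :: mat1 where "Hm = (\<lambda>i j. (if i \<and> j then -1 else 1) * ((1 + \<i>)/2))"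

definition swXY :: "pauli \<Rightarrow> pauli" where
  "swXY p = (if p = PX then PY else if p = PY then PX else p)"
definition swXZ :: "pauli \<Rightarrow> pauli" where
  "swXZ p = (if p = PX then PZ else if p = PZ then PX else p)"

lemma Sm_unitary: "unitary1 Sm"
  by (auto simp: unitary1_def fun_eq_iff mul1_def adj1_def Sm_def id1_def sum_b)

lemma Hm_unitary: "unitary1 Hm"
  unfolding unitary1_def
  by (simp add: fun_eq_iff mul1_def adj1_def Hm_def id1_def sum_b) (simp add: field_simps)

lemma Sm_conj: "\<exists>c. conj1 Sm (pmat p) = smult1 c (pmat (swXY p))"
  by (rule exI[of _ "if p = PY then -1 else 1"], cases p; simp add: fun_eq_iff conj1_def mul1_def adj1_def Sm_def smult1_def
          pmat_def id1_def swXY_def sum_b)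

lemma Hm_conj: "\<exists>c. conj1 Hm (pmat p) = smult1 c (pmat (swXZ p))"
proof (cases p)
  case PI thus ?thesis
    by (intro exI[of _ 1]) (simp add: fun_eq_iff conj1_def mul1_def adj1_def Hm_def smult1_def
          pmat_def id1_def swXZ_def sum_b, simp add: field_simps)
next
  case PX thus ?thesis
    by (intro exI[of _ 1]) (simp add: fun_eq_iff conj1_def mul1_def adj1_def Hm_def smult1_def
          pmat_def id1_def swXZ_def sum_b, simp add: field_simps)
next
  case PY thus ?thesis
    by (intro exI[of _ "-1"]) (simp add: fun_eq_iff conj1_def mul1_def adj1_def Hm_def smult1_def
          pmat_def id1_def swXZ_def sum_b, simp add: field_simps)
next
  case PZ thus ?thesis
    by (intro exI[of _ 1]) (simp add: fun_eq_iff conj1_def mul1_def adj1_def Hm_def smult1_def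
          pmat_def id1_def swXZ_def sum_b, simp add: field_simps)
qed

lemma Sm_cl: "clifford1 Sm \<and> act1 Sm = swXY"
proof -
  have cl: "clifford1 Sm" unfolding clifford1_def using Sm_unitary Sm_conj unfolding conj1_def by blast
  moreover have "act1 Sm = swXY"
  proof
    fix r obtain c where "conj1 Sm (pmat r) = smult1 c (pmat (swXY r))" using Sm_conj by blast
    thus "act1 Sm r = swXY r" using cl1_unique[OF cl] by blast
  qed
  ultimately show ?thesis by blast
qed

lemma Hm_cl: "clifford1 Hm \<and> act1 Hm = swXZ"
proof -
  have cl: "clifford1 Hm" unfolding clifford1_def using Hm_unitary Hm_conj unfolding conj1_def by blast
  moreover have "act1 Hm = swXZ"
  proof
    fix r obtain c where "conj1 Hm (pmat r) = smult1 c (pmat (swXZ r))" using Hm_conj by blast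
    thus "act1 Hm r = swXZ r" using cl1_unique[OF cl] by blast
  qed
  ultimately show ?thesis by blast
qed

lemma act1_id: "act1 id1 = id"
proof
  fix r have "conj1 id1 (pmat r) = smult1 1 (pmat r)" by (simp add: conj1_def adj1_def id1_def fun_eq_iff mul1_def sum_b)
  thus "act1 id1 r = id r" using cl1_unique[OF cl1_id, of r 1 r] by simp
qed

definition zs :: "bool \<Rightarrow> complex" where "zs b = (if b then -1 else 1)"
lemma eZ1a: "mul2 W (PT (PZ,PI)) i k = W i k * zs (fst k)"
  by (cases k) (simp add: mul2_def PT_def tensor_def pmat_def id1_def sum_bb zs_def)
lemma eZ1b: "mul2 (PT (PZ,PI)) W i k = zs (fst i) * W i k"
  by (cases i) (simp add: mul2_def PT_def tensor_def pmat_def id1_def sum_bb zs_def)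
lemma eZ2a: "mul2 W (PT (PI,PZ)) i k = W i k * zs (snd k)"
  by (cases k) (simp add: mul2_def PT_def tensor_def pmat_def id1_def sum_bb zs_def)
lemma eZ2b: "mul2 (PT (PI,PZ)) W i k = zs (snd i) * W i k"
  by (cases i) (simp add: mul2_def PT_def tensor_def pmat_def id1_def sum_bb zs_def)
lemma eX1a: "mul2 W (PT (PX,PI)) i k = W i (\<not> fst k, snd k)"
  by (cases k) (simp add: mul2_def PT_def tensor_def pmat_def id1_def sum_bb)
lemma eX1b: "mul2 (PT (PX,PI)) W i k = W (\<not> fst i, snd i) k"
  by (cases i) (simp add: mul2_def PT_def tensor_def pmat_def id1_def sum_bb)
lemma eX2a: "mul2 W (PT (PI,PX)) i k = W i (fst k, \<not> snd k)"
  by (cases k) (simp add: mul2_def PT_def tensor_def pmat_def id1_def sum_bb)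
lemma eX2b: "mul2 (PT (PI,PX)) W i k = W (fst i, \<not> snd i) k"
  by (cases i) (simp add: mul2_def PT_def tensor_def pmat_def id1_def sum_bb)

lemma commute_scalar:
  assumes "mul2 W (PT (PX,PI)) = mul2 (PT (PX,PI)) W" "mul2 W (PT (PZ,PI)) = mul2 (PT (PZ,PI)) W"
          "mul2 W (PT (PI,PX)) = mul2 (PT (PI,PX)) W" "mul2 W (PT (PI,PZ)) = mul2 (PT (PI,PZ)) W"
  shows "W = smult2 (W (False,False) (False,False)) id2"
proof -
  have z1: "W i k * zs (fst k) = zs (fst i) * W i k" for i k using assms(2) eZ1a eZ1b by metis
  have z2: "W i k * zs (snd k) = zs (snd i) * W i k" for i k using assms(4) eZ2a eZ2b by metis
  have x1: "W i (\<not> fst k, snd k) = W (\<not> fst i, snd i) k" for i k using assms(1) eX1a eX1b by metis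
  have x2: "W i (fst k, \<not> snd k) = W (fst i, \<not> snd i) k" for i k using assms(3) eX2a eX2b by metis
  have d1: "fst i \<noteq> fst k \<Longrightarrow> W i k = 0" for i k using z1[of i k] by (auto simp: zs_def split: if_splits)
  have d2: "snd i \<noteq> snd k \<Longrightarrow> W i k = 0" for i k using z2[of i k] by (auto simp: zs_def split: if_splits)
  have y1: "W (a,b) (a,b) = W (\<not>a,b) (\<not>a,b)" for a b using x1[of "(a,b)" "(\<not>a,b)"] by simp
  have y2: "W (a,b) (a,b) = W (a,\<not>b) (a,\<not>b)" for a b using x2[of "(a,b)" "(a,\<not>b)"] by simp
  have dg: "W (a,b) (a,b) = W (False,False) (False,False)" for a b
    by (cases a; cases b) (use y1 y2 in metis)+
  show ?thesis
  proof (rule ext, rule ext)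
    fix i k :: "bool \<times> bool"
    show "W i k = smult2 (W (False,False) (False,False)) id2 i k"
    proof (cases "i = k")
      case True thus ?thesis using dg[of "fst i" "snd i"] by (simp add: smult2_def id2_def)
    next
      case False thus ?thesis using d1 d2 by (cases i; cases k) (auto simp: smult2_def id2_def)
    qed
  qed
qed

lemma acomm_PI[simp]: "acomm x PI = False" "acomm PI x = False" by (simp_all add: acomm_def)

lemma acomm_choose: "\<exists>p. acomm p PX = b1 \<and> acomm p PZ = b2"
  by (cases b1; cases b2) (rule exI[of _ PY] exI[of _ PZ] exI[of _ PX] exI[of _ PI], simp add: acomm_def)+

lemma same_action:
  assumes G: "clifford2 G" and K: "clifford2 K" and eq: "gate_act G = gate_act K"
  shows "\<exists>c r. G = smult2 c (mul2 K (PT r))"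
proof -
  have uG: "unitary2 G" and uK: "unitary2 K" using G K cl_unitary by auto
  define V where "V = mul2 (adj2 K) G"
  have uV: "unitary2 V" using uG uK unfolding unitary2_def V_def
    by (simp add: adj2_mul mul2_assoc) (simp add: mul2_assoc[symmetric])
  have cv: "\<exists>l. conj2 V (PT r) = smult2 l (PT r)" for r
  proof -
    obtain a where a: "conj2 G (PT r) = smult2 a (PT (gate_act K r))" using ga_char[OF G, of r] eq by auto
    obtain b where b: "b \<noteq> 0" "conj2 K (PT r) = smult2 b (PT (gate_act K r))" using ga_char[OF K, of r] by auto
    have "PT r = mul2 (mul2 (adj2 K) (conj2 K (PT r))) K" using conj2_back[OF uK] by simp
    hence pr: "PT r = smult2 b (mul2 (mul2 (adj2 K) (PT (gate_act K r))) K)" using b by simp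
    have "conj2 V (PT r) = mul2 (mul2 (adj2 K) (conj2 G (PT r))) K"
      by (simp add: conj2_def V_def adj2_mul mul2_assoc)
    also have "\<dots> = smult2 a (mul2 (mul2 (adj2 K) (PT (gate_act K r))) K)" by (simp add: a)
    also have "\<dots> = smult2 (a/b) (PT r)" using b(1) by (subst pr) simp
    finally show ?thesis by blast
  qed
  have VV: "mul2 (adj2 V) V = id2" using uV unitary2_def by blast
  have comm: "\<exists>l. (l = 1 \<or> l = -1) \<and> mul2 V (PT r) = smult2 l (mul2 (PT r) V)" for r
  proof -
    obtain l where l: "conj2 V (PT r) = smult2 l (PT r)" using cv by blast
    have "mul2 V (PT r) = mul2 (conj2 V (PT r)) V"
      by (simp add: conj2_def mul2_assoc VV)
    hence 1: "mul2 V (PT r) = smult2 l (mul2 (PT r) V)" using l by simp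
    have "id2 = conj2 V (mul2 (PT r) (PT r))" by (simp add: PT_sq conj2_id[OF uV])
    also have "\<dots> = smult2 (l*l) id2" by (simp only: conj2_mul[OF uV] l mul2_smult smult2_smult2) (simp add: PT_sq mult.commute)
    finally have "smult2 1 (PT (PI,PI)) = smult2 (l*l) (PT (PI,PI))" by (simp add: PT_II)
    hence "l*l = 1" using PT_indep by (metis one_neq_zero)
    hence "l = 1 \<or> l = -1" by (metis square_eq_1_iff power2_eq_square)
    thus ?thesis using 1 by blast
  qed
  define lam where "lam r = (SOME l. (l = 1 \<or> l = -1) \<and> mul2 V (PT r) = smult2 l (mul2 (PT r) V))" for r
  have lam: "(lam r = 1 \<or> lam r = -1) \<and> mul2 V (PT r) = smult2 (lam r) (mul2 (PT r) V)" for r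
    unfolding lam_def by (rule someI_ex[OF comm])
  obtain p where p: "acomm p PX = (lam (PX,PI) = -1)" "acomm p PZ = (lam (PZ,PI) = -1)" using acomm_choose by blast
  obtain q where q: "acomm q PX = (lam (PI,PX) = -1)" "acomm q PZ = (lam (PI,PZ) = -1)" using acomm_choose by blast
  define W where "W = mul2 V (PT (p,q))"
  have gen: "mul2 W (PT g) = mul2 (PT g) W" if "acomm2 (p,q) g = (lam g = -1)" for g
  proof -
    have "mul2 W (PT g) = mul2 V (mul2 (PT (p,q)) (PT g))" by (simp add: W_def mul2_assoc)
    also have "\<dots> = smult2 (if acomm2 (p,q) g then -1 else 1) (mul2 (mul2 V (PT g)) (PT (p,q)))"
      by (subst PT_comm) (simp add: mul2_assoc)
    also have "\<dots> = smult2 ((if acomm2 (p,q) g then -1 else 1) * lam g) (mul2 (PT g) W)"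
      using lam[of g] by (simp add: W_def mul2_assoc)
    also have "\<dots> = mul2 (PT g) W" using that lam[of g] by auto
    finally show ?thesis .
  qed
  have "W = smult2 (W (False,False) (False,False)) id2"
    apply (rule commute_scalar)
    by (rule gen, simp add: acomm2_def p q)+
  hence "V = smult2 (W (False,False) (False,False)) (PT (p,q))"
    by (metis W_def PT_sq mul2_assoc mul2_id(1) mul2_id(2) mul2_smult(2))
  moreover have "G = mul2 K V" using uK unfolding V_def unitary2_def by (simp add: mul2_assoc[symmetric])
  ultimately show ?thesis by auto
qed

definition perm1 :: "(pauli \<Rightarrow> pauli) \<Rightarrow> bool" where
  "perm1 s \<longleftrightarrow> bij s \<and> s PI = PI"
definition lcl :: "(pauli \<Rightarrow> pauli) \<Rightarrow> (pauli \<Rightarrow> pauli) \<Rightarrow> pauli \<times> pauli \<Rightarrow> pauli \<times> pauli" where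
  "lcl s t = (\<lambda>r. (s (fst r), t (snd r)))"
definition hom :: "(pauli \<times> pauli \<Rightarrow> pauli \<times> pauli) \<Rightarrow> bool" where
  "hom f \<longleftrightarrow> (\<forall>r s. f (ppmul r s) = ppmul (f r) (f s))"
definition ok :: "(pauli \<times> pauli \<Rightarrow> pauli \<times> pauli) \<Rightarrow> bool" where
  "ok f \<longleftrightarrow> hom f \<and> (\<forall>r s. acomm2 (f r) (f s) = acomm2 r s) \<and> inj f"
definition czform :: "(pauli \<times> pauli \<Rightarrow> pauli \<times> pauli) \<Rightarrow> bool" where
  "czform f \<longleftrightarrow> (\<exists>s1 s2 s3 s4. perm1 s1 \<and> perm1 s2 \<and> perm1 s3 \<and> perm1 s4 \<and> f = lcl s1 s2 \<circ> czf \<circ> lcl s3 s4)"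
definition prodform :: "(pauli \<times> pauli \<Rightarrow> pauli \<times> pauli) \<Rightarrow> bool" where
  "prodform f \<longleftrightarrow> (\<exists>s1 s2. perm1 s1 \<and> perm1 s2 \<and> f = lcl s1 s2)"

lemma third: "x \<noteq> PI \<Longrightarrow> y \<noteq> PI \<Longrightarrow> z \<noteq> PI \<Longrightarrow> x \<noteq> y \<Longrightarrow> x \<noteq> z \<Longrightarrow> y \<noteq> z \<Longrightarrow> pmul x y = z"
  by (cases x; cases y; cases z; simp)
lemma third2: "p \<noteq> PI \<Longrightarrow> q \<noteq> PI \<Longrightarrow> p \<noteq> q \<Longrightarrow> pmul p q \<noteq> PI \<and> pmul p q \<noteq> p \<and> pmul p q \<noteq> q"
  by (cases p; cases q; simp)

lemma perm_inj: "perm1 s \<Longrightarrow> s x = s y \<longleftrightarrow> x = y"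
  unfolding perm1_def bij_def inj_def by blast
lemma perm_I: "perm1 s \<Longrightarrow> s x = PI \<longleftrightarrow> x = PI"
  using perm_inj[of s x PI] unfolding perm1_def by simp

lemma perm_hom: assumes "perm1 s" shows "s (pmul p q) = pmul (s p) (s q)"
proof -
  have sI: "s PI = PI" using assms perm1_def by blast
  show ?thesis
  proof (cases "p = PI \<or> q = PI \<or> p = q")
    case True thus ?thesis using sI by auto
  next
    case False
    hence "pmul p q \<noteq> PI \<and> pmul p q \<noteq> p \<and> pmul p q \<noteq> q" using third2 by blast
    thus ?thesis using False third[of "s p" "s q" "s (pmul p q)"] perm_inj[OF assms] perm_I[OF assms] by metis
  qed
qed

lemma perm_acomm: "perm1 s \<Longrightarrow> acomm (s p) (s q) = acomm p q"
  unfolding acomm_def using perm_inj perm_I by metis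

lemma perm_inv: assumes "perm1 s" shows "perm1 (inv s)" "s \<circ> inv s = id" "inv s \<circ> s = id"
proof -
  have b: "bij s" "s PI = PI" using assms perm1_def by auto
  show "perm1 (inv s)" unfolding perm1_def using b bij_imp_bij_inv by (metis bij_def inv_f_f)
  show "s \<circ> inv s = id" using bij_is_surj[OF b(1)] surj_iff by blast
  show "inv s \<circ> s = id" using bij_is_inj[OF b(1)] inj_iff by blast
qed

lemma perm_id: "perm1 id" by (simp add: perm1_def)
lemma perm_comp: "perm1 s \<Longrightarrow> perm1 t \<Longrightarrow> perm1 (s \<circ> t)"
  unfolding perm1_def using bij_comp by auto

lemma lcl_comp: "lcl s t \<circ> lcl s' t' = lcl (s \<circ> s') (t \<circ> t')"
  by (simp add: lcl_def fun_eq_iff)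
lemma lcl_id: "lcl id id = id" by (simp add: lcl_def fun_eq_iff)
lemma lcl_app[simp]: "lcl s t (p,q) = (s p, t q)" by (simp add: lcl_def)

lemma ok_lcl: "perm1 s \<Longrightarrow> perm1 t \<Longrightarrow> ok (lcl s t)"
  unfolding ok_def hom_def
  by (auto simp: lcl_def ppmul_def perm_hom acomm2_def perm_acomm inj_def perm_inj)

lemma ok_comp: assumes "ok f" "ok g" shows "ok (f \<circ> g)"
proof -
  have "hom (f \<circ> g)" using assms unfolding ok_def hom_def comp_def by metis
  moreover have "\<forall>r s. acomm2 ((f \<circ> g) r) ((f \<circ> g) s) = acomm2 r s" using assms unfolding ok_def comp_def by metis
  moreover have "inj (f \<circ> g)" using assms unfolding ok_def using inj_compose by blast
  ultimately show ?thesis unfolding ok_def by blast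
qed

lemma ok_ga: "clifford2 C \<Longrightarrow> ok (gate_act C)"
  unfolding ok_def hom_def using ga_hom ga_acomm ga_inj by blast

lemma hom_II: "hom f \<Longrightarrow> f (PI,PI) = (PI,PI)"
  unfolding hom_def by (metis ppmul_self)

lemma det:
  assumes "hom f" "hom g" "f (PX,PI) = g (PX,PI)" "f (PZ,PI) = g (PZ,PI)"
     "f (PI,PX) = g (PI,PX)" "f (PI,PZ) = g (PI,PZ)"
  shows "f = g"
proof
  fix r
  have h: "f (ppmul r s) = ppmul (f r) (f s)" "g (ppmul r s) = ppmul (g r) (g s)" for r s
    using assms(1,2) unfolding hom_def by blast+
  have l: "f (p,PI) = g (p,PI)" for p
  proof (cases p)
    case PY
    have "(PY,PI) = ppmul (PX,PI) (PZ,PI)" by (simp add: ppmul_def)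
    thus ?thesis using PY h assms by metis
  qed (use assms hom_II[OF assms(1)] hom_II[OF assms(2)] in auto)
  have rr: "f (PI,q) = g (PI,q)" for q
  proof (cases q)
    case PY
    have "(PI,PY) = ppmul (PI,PX) (PI,PZ)" by (simp add: ppmul_def)
    thus ?thesis using PY h assms by metis
  qed (use assms hom_II[OF assms(1)] hom_II[OF assms(2)] in auto)
  obtain p q :: pauli where r: "r = (p,q)" by force
  have "r = ppmul (p,PI) (PI,q)" by (simp add: r ppmul_def)
  thus "f r = g r" using h l rr by metis
qed

definition mkperm :: "pauli \<Rightarrow> pauli \<Rightarrow> pauli \<Rightarrow> pauli" where
  "mkperm u v p = (case p of PI \<Rightarrow> PI | PX \<Rightarrow> u | PZ \<Rightarrow> v | PY \<Rightarrow> pmul u v)"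

lemma mkperm_perm: assumes "u \<noteq> PI" "v \<noteq> PI" "u \<noteq> v" shows "perm1 (mkperm u v)"
proof -
  have i: "inj (mkperm u v)" unfolding inj_def
  proof (intro allI impI)
    fix x y assume "mkperm u v x = mkperm u v y"
    thus "x = y" using assms by (cases x; cases y; cases u; cases v; simp add: mkperm_def)
  qed
  hence "bij (mkperm u v)" using finite_UNIV_inj_surj[OF finite_pauli i] bij_def by blast
  thus ?thesis by (simp add: perm1_def mkperm_def)
qed

lemma perm_to: "v \<noteq> PI \<Longrightarrow> \<exists>s. perm1 s \<and> s PZ = v"
proof -
  assume v: "v \<noteq> PI"
  define u where "u = (if v = PX then PZ else PX)"
  have "perm1 (mkperm u v)" using v by (intro mkperm_perm) (auto simp: u_def)
  thus ?thesis by (auto simp: mkperm_def)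
qed

lemma perm_eq: assumes "perm1 s" "perm1 t" "s PX = t PX" "s PZ = t PZ" shows "s = t"
proof
  fix p show "s p = t p"
  proof (cases p)
    case PY
    have "PY = pmul PX PZ" by simp
    thus ?thesis using PY perm_hom assms by metis
  qed (use assms perm1_def in auto)
qed

lemma swXY_perm: "perm1 swXY"
proof -
  have "swXY \<circ> swXY = id" by (auto simp: fun_eq_iff swXY_def)
  hence "bij swXY" using o_bij by blast
  thus ?thesis by (simp add: perm1_def swXY_def)
qed

lemma swXZ_perm: "perm1 swXZ"
proof -
  have "swXZ \<circ> swXZ = id" by (auto simp: fun_eq_iff swXZ_def)
  hence "bij swXZ" using o_bij by blast
  thus ?thesis by (simp add: perm1_def swXZ_def)
qed

lemma perm_cases: assumes "perm1 s" shows "\<exists>l. clifford1 l \<and> act1 l = s"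
proof -
  have sX: "s PX \<noteq> PI" and sZ: "s PZ \<noteq> PI" and sXZ: "s PX \<noteq> s PZ"
    using perm_I[OF assms] perm_inj[OF assms] by auto
  have S: "clifford1 Sm" "act1 Sm = swXY" using Sm_cl by auto
  have H: "clifford1 Hm" "act1 Hm = swXZ" using Hm_cl by auto
  have HS: "clifford1 (mul1 Hm Sm)" "act1 (mul1 Hm Sm) = swXZ \<circ> swXY" using cl1_mul[OF H(1) S(1)] H S by auto
  have SH: "clifford1 (mul1 Sm Hm)" "act1 (mul1 Sm Hm) = swXY \<circ> swXZ" using cl1_mul[OF S(1) H(1)] H S by auto
  have HSH: "clifford1 (mul1 Hm (mul1 Sm Hm))" "act1 (mul1 Hm (mul1 Sm Hm)) = swXZ \<circ> (swXY \<circ> swXZ)"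
    using cl1_mul[OF H(1) SH(1)] H SH by auto
  have I: "clifford1 id1" "act1 id1 = id" using cl1_id act1_id by auto
  have P: "perm1 swXZ" "perm1 swXY" "perm1 (swXZ \<circ> swXY)" "perm1 (swXY \<circ> swXZ)" "perm1 (swXZ \<circ> (swXY \<circ> swXZ))" "perm1 id"
    using swXZ_perm swXY_perm perm_comp perm_id by auto
  have six: "(s PX = PX \<and> s PZ = PZ) \<or> (s PX = PY \<and> s PZ = PZ) \<or> (s PX = PZ \<and> s PZ = PX) \<or>
             (s PX = PY \<and> s PZ = PX) \<or> (s PX = PZ \<and> s PZ = PY) \<or> (s PX = PX \<and> s PZ = PY)"
    using sX sZ sXZ by (cases "s PX"; cases "s PZ") auto
  have cands: "\<exists>l. clifford1 l \<and> perm1 (act1 l) \<and> act1 l PX = s PX \<and> act1 l PZ = s PZ"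
    using six
  proof (elim disjE conjE)
    assume "s PX = PX" "s PZ = PZ" thus ?thesis using I P by (intro exI[of _ id1]) simp
  next
    assume "s PX = PY" "s PZ = PZ" thus ?thesis using S P by (intro exI[of _ Sm]) (simp add: swXY_def)
  next
    assume "s PX = PZ" "s PZ = PX" thus ?thesis using H P by (intro exI[of _ Hm]) (simp add: swXZ_def)
  next
    assume "s PX = PY" "s PZ = PX" thus ?thesis using HS P by (intro exI[of _ "mul1 Hm Sm"]) (simp add: swXZ_def swXY_def)
  next
    assume "s PX = PZ" "s PZ = PY" thus ?thesis using SH P by (intro exI[of _ "mul1 Sm Hm"]) (simp add: swXZ_def swXY_def)
  next
    assume "s PX = PX" "s PZ = PY" thus ?thesis using HSH P by (intro exI[of _ "mul1 Hm (mul1 Sm Hm)"]) (simp add: swXZ_def swXY_def)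
  qed
  then obtain l where "clifford1 l" "perm1 (act1 l)" "act1 l PX = s PX" "act1 l PZ = s PZ" by blast
  thus ?thesis using perm_eq[OF _ assms] by metis
qed

lemma transfer_cz:
  assumes "perm1 a" "perm1 b" "perm1 c" "perm1 d" "czform (lcl a b \<circ> f \<circ> lcl c d)"
  shows "czform f"
proof -
  obtain s1 s2 s3 s4 where s: "perm1 s1" "perm1 s2" "perm1 s3" "perm1 s4"
    and e: "lcl a b \<circ> f \<circ> lcl c d = lcl s1 s2 \<circ> czf \<circ> lcl s3 s4"
    using assms(5) czform_def by blast
  have "f = lcl (inv a) (inv b) \<circ> (lcl a b \<circ> f \<circ> lcl c d) \<circ> lcl (inv c) (inv d)"
    by (simp add: o_assoc lcl_comp perm_inv assms lcl_id) (simp add: o_assoc[symmetric] lcl_comp perm_inv assms lcl_id)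
  also have "\<dots> = lcl (inv a \<circ> s1) (inv b \<circ> s2) \<circ> czf \<circ> lcl (s3 \<circ> inv c) (s4 \<circ> inv d)"
    unfolding e by (simp add: o_assoc lcl_comp) (simp add: o_assoc[symmetric] lcl_comp)
  finally show ?thesis unfolding czform_def using s assms perm_inv perm_comp by metis
qed

lemma transfer_prod:
  assumes "perm1 a" "perm1 b" "perm1 c" "perm1 d" "prodform (lcl a b \<circ> f \<circ> lcl c d)"
  shows "prodform f"
proof -
  obtain s1 s2 where s: "perm1 s1" "perm1 s2"
    and e: "lcl a b \<circ> f \<circ> lcl c d = lcl s1 s2"
    using assms(5) prodform_def by blast
  have "f = lcl (inv a) (inv b) \<circ> (lcl a b \<circ> f \<circ> lcl c d) \<circ> lcl (inv c) (inv d)"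
    by (simp add: o_assoc lcl_comp perm_inv assms lcl_id) (simp add: o_assoc[symmetric] lcl_comp perm_inv assms lcl_id)
  also have "\<dots> = lcl (inv a \<circ> s1 \<circ> inv c) (inv b \<circ> s2 \<circ> inv d)"
    unfolding e by (simp add: lcl_comp)
  finally show ?thesis unfolding prodform_def using s assms perm_inv perm_comp by metis
qed

lemma okD: assumes "ok g"
  shows "g (ppmul r s) = ppmul (g r) (g s)" "acomm2 (g r) (g s) = acomm2 r s" "inj g"
  using assms unfolding ok_def hom_def by blast+

lemma perm_inv_I: "perm1 s \<Longrightarrow> inv s PI = PI"
  using perm_inv(1) perm1_def by blast
lemma perm_inv_app: "perm1 s \<Longrightarrow> inv s (s x) = x"
  unfolding perm1_def by (simp add: bij_is_inj)

lemma swXY_vals[simp]: "swXY PX = PY" "swXY PY = PX" "swXY PZ = PZ" "swXY PI = PI"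
  by (simp_all add: swXY_def)

lemma CL0:
  assumes okg: "ok g" and gZ: "g (PZ,PI) = (PZ,PI)"
  shows "czform g \<or> prodform g"
proof -
  note hg = okD(1)[OF okg] and ag = okD(2)[OF okg] and ig = okD(3)[OF okg]
  have hom_g: "hom g" using okg unfolding ok_def by blast
  have gII: "g (PI,PI) = (PI,PI)" using hom_II[OF hom_g] .
  define chi where "chi q = fst (g (PI,q))" for q
  define rho where "rho q = snd (g (PI,q))" for q
  have gIq: "g (PI,q) = (chi q, rho q)" for q by (simp add: chi_def rho_def)
  have chiZ: "chi q = PI \<or> chi q = PZ" for q
  proof -
    have "acomm2 (g (PI,q)) (g (PZ,PI)) = acomm2 (PI,q) (PZ,PI)" by (rule ag)
    hence "\<not> acomm (chi q) PZ" by (simp add: gIq gZ acomm2_def)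
    thus ?thesis by (auto simp: acomm_def)
  qed
  have pp: "ppmul (PI,a) (PI,b) = (PI, pmul a b)" for a b by (simp add: ppmul_def)
  have chihom: "chi (pmul a b) = pmul (chi a) (chi b)" and rhohom: "rho (pmul a b) = pmul (rho a) (rho b)" for a b
    using hg[of "(PI,a)" "(PI,b)"] by (simp_all add: pp gIq ppmul_def)
  have rhoI: "rho PI = PI" and chiI: "chi PI = PI" using gII by (simp_all add: chi_def rho_def)
  have rhoinj: "inj rho"
  proof (rule injI)
    fix q1 q2 assume e: "rho q1 = rho q2"
    hence r0: "rho (pmul q1 q2) = PI" using rhohom by simp
    show "q1 = q2"
    proof (cases "chi (pmul q1 q2) = PI")
      case True
      hence "g (PI, pmul q1 q2) = g (PI,PI)" using gIq r0 gII by simp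
      hence "(PI, pmul q1 q2) = (PI,PI)" by (rule injD[OF ig])
      hence "pmul q1 q2 = PI" by simp
      thus ?thesis by (simp add: pmul_eq_PI)
    next
      case False
      hence "chi (pmul q1 q2) = PZ" using chiZ by blast
      hence "g (PI, pmul q1 q2) = g (PZ,PI)" using gIq r0 gZ by simp
      hence "(PI, pmul q1 q2) = (PZ,PI)" by (rule injD[OF ig])
      thus ?thesis by simp
    qed
  qed
  have "surj rho" using finite_UNIV_inj_surj[OF finite_pauli rhoinj] .
  hence rhobij: "bij rho" by (simp add: bij_def rhoinj)
  have rhoperm: "perm1 rho" unfolding perm1_def using rhobij rhoI by simp
  show ?thesis
  proof (cases "\<forall>q. chi q = PI")
    case True
    obtain x r where gX: "g (PX,PI) = (x,r)" by force
    obtain qx where qx: "rho qx = PX" using rhobij by (metis bij_pointE)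
    obtain qz where qz: "rho qz = PZ" using rhobij by (metis bij_pointE)
    have "acomm2 (g (PX,PI)) (g (PI,qx)) = acomm2 (PX,PI) (PI,qx)" by (rule ag)
    hence r1: "\<not> acomm r PX" using True by (simp add: gX gIq qx acomm2_def)
    have "acomm2 (g (PX,PI)) (g (PI,qz)) = acomm2 (PX,PI) (PI,qz)" by (rule ag)
    hence r2: "\<not> acomm r PZ" using True by (simp add: gX gIq qz acomm2_def)
    have rI: "r = PI" using r1 r2 by (cases r) (auto simp: acomm_def)
    have "acomm2 (g (PX,PI)) (g (PZ,PI)) = acomm2 (PX,PI) (PZ,PI)" by (rule ag)
    hence x1: "acomm x PZ" by (simp add: gX gZ acomm2_def acomm_def)
    define lam where "lam = (if x = PX then id else swXY)"
    have lp: "perm1 lam" using swXY_perm perm_id lam_def by auto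
    have lX: "lam PX = x" and lZ: "lam PZ = PZ" and lI: "lam PI = PI"
      using x1 by (cases x; auto simp: lam_def acomm_def)+
    have "g = lcl lam rho"
    proof (rule det)
      show "hom g" using okg ok_def by blast
      show "hom (lcl lam rho)" using ok_lcl[OF lp rhoperm] ok_def by blast
    qed (use gX rI lX lZ lI gZ gIq True rhoI in auto)
    thus ?thesis using lp rhoperm prodform_def by blast
  next
    case False
    then obtain q1 where q1: "chi q1 \<noteq> PI" by blast
    have chiY: "chi PY = pmul (chi PX) (chi PZ)" using chihom[of PX PZ] by simp
    have "\<exists>k m. k \<noteq> PI \<and> m \<noteq> PI \<and> k \<noteq> m \<and> chi k = PI \<and> chi m = PZ"
    proof (cases "chi PX = PI")
      case cx: True
      have "chi PZ = PZ"
      proof (rule ccontr)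
        assume "chi PZ \<noteq> PZ" hence "chi PZ = PI" using chiZ by blast
        hence "chi q = PI" for q using cx chiY chiI by (cases q) auto
        thus False using q1 by blast
      qed
      thus ?thesis using cx by (intro exI[of _ PX] exI[of _ PZ]) auto
    next
      case cx: False
      hence cx': "chi PX = PZ" using chiZ by blast
      show ?thesis
      proof (cases "chi PZ = PI")
        case True thus ?thesis using cx' by (intro exI[of _ PZ] exI[of _ PX]) auto
      next
        case False hence "chi PZ = PZ" using chiZ by blast
        thus ?thesis using cx' chiY by (intro exI[of _ PY] exI[of _ PX]) auto
      qed
    qed
    then obtain k m where km: "k \<noteq> PI" "m \<noteq> PI" "k \<noteq> m" "chi k = PI" "chi m = PZ" by blast
    define tau where "tau = mkperm m k"
    have tp: "perm1 tau" using km mkperm_perm tau_def by auto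
    have tX: "tau PX = m" and tZ: "tau PZ = k" and tI: "tau PI = PI" by (simp_all add: tau_def mkperm_def)
    define sig where "sig = rho \<circ> tau"
    have sp: "perm1 sig" using sig_def perm_comp rhoperm tp by blast
    define g3 where "g3 = lcl id (inv sig) \<circ> g \<circ> lcl id tau"
    have ok3: "ok g3" unfolding g3_def
      using ok_comp ok_lcl perm_id perm_inv(1)[OF sp] tp okg by metis
    have g3Z: "g3 (PZ,PI) = (PZ,PI)" using gZ tI perm_inv_I[OF sp] by (simp add: g3_def)
    have g3IZ: "g3 (PI,PZ) = (PI,PZ)" using tZ km perm_inv_app[OF sp, of PZ] by (simp add: g3_def gIq sig_def)
    have g3IX: "g3 (PI,PX) = (PZ,PX)" using tX km perm_inv_app[OF sp, of PX] by (simp add: g3_def gIq sig_def)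
    note ag3 = okD(2)[OF ok3]
    obtain x r where gX: "g3 (PX,PI) = (x,r)" by force
    have "acomm2 (g3 (PX,PI)) (g3 (PZ,PI)) = acomm2 (PX,PI) (PZ,PI)" by (rule ag3)
    hence x1: "acomm x PZ" by (simp add: gX g3Z acomm2_def acomm_def)
    have "acomm2 (g3 (PX,PI)) (g3 (PI,PZ)) = acomm2 (PX,PI) (PI,PZ)" by (rule ag3)
    hence r1: "\<not> acomm r PZ" by (simp add: gX g3IZ acomm2_def)
    have "acomm2 (g3 (PX,PI)) (g3 (PI,PX)) = acomm2 (PX,PI) (PI,PX)" by (rule ag3)
    hence r2: "acomm r PX" using x1 by (simp add: gX g3IX acomm2_def)
    have rZ: "r = PZ" using r1 r2 by (cases r) (auto simp: acomm_def)
    define mu where "mu = (if x = PX then id else swXY)"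
    have mp: "perm1 mu" using swXY_perm perm_id mu_def by auto
    have mX: "mu PX = x" and mZ: "mu PZ = PZ" and mI: "mu PI = PI"
      using x1 by (cases x; auto simp: mu_def acomm_def)+
    have czok: "ok czf" using ok_ga CZ_cl by metis
    have "g3 = lcl mu id \<circ> czf"
    proof (rule det)
      show "hom g3" using ok3 ok_def by blast
      show "hom (lcl mu id \<circ> czf)" using ok_comp[OF ok_lcl[OF mp perm_id] czok] ok_def by blast
    qed (use gX rZ mX mZ mI g3Z g3IZ g3IX in \<open>auto simp: czf_def zif_def\<close>)
    hence "czform g3" unfolding czform_def using mp perm_id by (metis lcl_id o_id)
    hence "czform g" using transfer_cz[OF perm_id perm_inv(1)[OF sp] perm_id tp] g3_def by simp
    thus ?thesis by blast
  qed
qed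

lemma CL:
  assumes okf: "ok f" and p0: "p0 \<noteq> PI" and sn: "snd (f (p0,PI)) = PI"
  shows "czform f \<or> prodform f"
proof -
  have hom_f: "hom f" using okf unfolding ok_def by blast
  have fII: "f (PI,PI) = (PI,PI)" using hom_II[OF hom_f] .
  note inf = okD(3)[OF okf]
  define p1 where "p1 = fst (f (p0,PI))"
  have fp0: "f (p0,PI) = (p1,PI)" using sn by (simp add: p1_def prod_eq_iff)
  have p1: "p1 \<noteq> PI"
  proof
    assume "p1 = PI"
    hence "f (p0,PI) = f (PI,PI)" using fp0 fII by simp
    hence "(p0,PI) = (PI,PI)" by (rule injD[OF inf])
    thus False using p0 by simp
  qed
  obtain pa where pa: "perm1 pa" "pa PZ = p0" using perm_to[OF p0] by blast
  obtain pb where pb: "perm1 pb" "pb PZ = p1" using perm_to[OF p1] by blast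
  define g where "g = lcl (inv pb) id \<circ> f \<circ> lcl pa id"
  have okg: "ok g" unfolding g_def
    using ok_comp ok_lcl perm_id perm_inv(1)[OF pb(1)] pa(1) okf by metis
  have gZ: "g (PZ,PI) = (PZ,PI)" using pa pb fp0 perm_inv_app[OF pb(1), of PZ] by (simp add: g_def)
  have "czform g \<or> prodform g" using CL0[OF okg gZ] .
  thus ?thesis
    using transfer_cz[OF perm_inv(1)[OF pb(1)] perm_id pa(1) perm_id] 
          transfer_prod[OF perm_inv(1)[OF pb(1)] perm_id pa(1) perm_id] g_def by blast
qed

lemma lcl_act: "clifford1 a \<Longrightarrow> clifford1 b \<Longrightarrow> gate_act (tensor a b) = lcl (act1 a) (act1 b)"
  using cl_tensor by (auto simp: lcl_def fun_eq_iff)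

lemma czform_class:
  assumes G: "clifford2 G" and cz: "czform (gate_act G)"
  shows "CZ_class G"
proof -
  obtain s1 s2 s3 s4 where s: "perm1 s1" "perm1 s2" "perm1 s3" "perm1 s4"
    and e: "gate_act G = lcl s1 s2 \<circ> czf \<circ> lcl s3 s4" using cz czform_def by blast
  obtain l1 where l1: "clifford1 l1" "act1 l1 = s1" using perm_cases[OF s(1)] by blast
  obtain l2 where l2: "clifford1 l2" "act1 l2 = s2" using perm_cases[OF s(2)] by blast
  obtain l3 where l3: "clifford1 l3" "act1 l3 = s3" using perm_cases[OF s(3)] by blast
  obtain l4 where l4: "clifford1 l4" "act1 l4 = s4" using perm_cases[OF s(4)] by blast
  have t12: "clifford2 (tensor l1 l2)" "gate_act (tensor l1 l2) = lcl s1 s2"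
    using cl_tensor[OF l1(1) l2(1)] lcl_act[OF l1(1) l2(1)] l1 l2 by auto
  have t34: "clifford2 (tensor l3 l4)" "gate_act (tensor l3 l4) = lcl s3 s4"
    using cl_tensor[OF l3(1) l4(1)] lcl_act[OF l3(1) l4(1)] l3 l4 by auto
  have c1: "clifford2 (mul2 (tensor l1 l2) CZ)" "gate_act (mul2 (tensor l1 l2) CZ) = lcl s1 s2 \<circ> czf"
    using cl_mul[OF t12(1)] CZ_cl t12(2) by auto
  define K where "K = mul2 (mul2 (tensor l1 l2) CZ) (tensor l3 l4)"
  have K: "clifford2 K" "gate_act K = lcl s1 s2 \<circ> czf \<circ> lcl s3 s4"
    using cl_mul[OF c1(1) t34(1)] c1(2) t34(2) K_def by auto
  obtain c r where Ge: "G = smult2 c (mul2 K (PT r))" using same_action[OF G K(1)] e K(2) by metis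
  have "mul2 K (PT r) = mul2 (mul2 (tensor l1 l2) CZ) (tensor (mul1 l3 (pmat (fst r))) (mul1 l4 (pmat (snd r))))"
    by (simp add: K_def mul2_assoc PT_def tensor_mul)
  moreover have "clifford1 (mul1 l3 (pmat (fst r)))" "clifford1 (mul1 l4 (pmat (snd r)))"
    using cl1_mul[OF l3(1) cl1_pmat] cl1_mul[OF l4(1) cl1_pmat] by auto
  ultimately show ?thesis unfolding CZ_class_def gate_class_def using Ge l1(1) l2(1) by metis
qed

lemma prodform_class:
  assumes G: "clifford2 G" and pf: "prodform (gate_act G)"
  shows "product_class G"
proof -
  obtain s1 s2 where s: "perm1 s1" "perm1 s2"
    and e: "gate_act G = lcl s1 s2" using pf prodform_def by blast
  obtain l1 where l1: "clifford1 l1" "act1 l1 = s1" using perm_cases[OF s(1)] by blast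
  obtain l2 where l2: "clifford1 l2" "act1 l2 = s2" using perm_cases[OF s(2)] by blast
  have t12: "clifford2 (tensor l1 l2)" "gate_act (tensor l1 l2) = lcl s1 s2"
    using cl_tensor[OF l1(1) l2(1)] lcl_act[OF l1(1) l2(1)] l1 l2 by auto
  obtain c r where Ge: "G = smult2 c (mul2 (tensor l1 l2) (PT r))" using same_action[OF G t12(1)] e t12(2) by metis
  have "mul2 (tensor l1 l2) (PT r) = tensor (mul1 l1 (pmat (fst r))) (mul1 l2 (pmat (snd r)))"
    by (simp add: PT_def tensor_mul)
  moreover have "clifford1 (mul1 l1 (pmat (fst r)))" "clifford1 (mul1 l2 (pmat (snd r)))"
    using cl1_mul[OF l1(1) cl1_pmat] cl1_mul[OF l2(1) cl1_pmat] by auto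
  ultimately show ?thesis unfolding product_class_def using Ge by metis
qed

lemma classify:
  assumes "clifford2 G" "\<not> product_class G" "p \<noteq> PI" "snd (gate_act G (p,PI)) = PI"
  shows "CZ_class G"
  using CL[OF ok_ga[OF assms(1)] assms(3,4)] czform_class[OF assms(1)] prodform_class[OF assms(1)] assms(2)
  by blast

definition smul :: "(int \<Rightarrow> pauli) \<Rightarrow> (int \<Rightarrow> pauli) \<Rightarrow> (int \<Rightarrow> pauli)" where
  "smul P Q = (\<lambda>j. pmul (P j) (Q j))"
definition sle :: "(int \<Rightarrow> pauli) \<Rightarrow> int \<Rightarrow> bool" where
  "sle P b \<longleftrightarrow> (\<forall>i. P i \<noteq> PI \<longrightarrow> i \<le> b)"
definition fin :: "(int \<Rightarrow> pauli) \<Rightarrow> bool" where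
  "fin P \<longleftrightarrow> finite {i. P i \<noteq> PI}"

lemma layer_at: "layer par G P j = (if even (j - par) then fst (gate_act (G j) (P j, P (j+1)))
     else snd (gate_act (G (j-1)) (P (j-1), P j)))"
  by (simp add: layer_def Let_def)

lemma ga_pair_hom: "clifford2 C \<Longrightarrow> gate_act C (pmul a b, pmul c d) = ppmul (gate_act C (a,c)) (gate_act C (b,d))"
  using ga_hom[of C "(a,c)" "(b,d)"] by (simp add: ppmul_def)

lemma layer_hom:
  assumes cl: "\<forall>i. clifford2 (G i)"
  shows "layer par G (smul P Q) = smul (layer par G P) (layer par G Q)"
  by (rule ext) (simp add: layer_at smul_def ga_pair_hom cl ppmul_def)

lemma Ustep_hom:
  assumes cl: "\<forall>i. clifford2 (G i)"
  shows "Ustep G (smul P Q) = smul (Ustep G P) (Ustep G Q)"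
  by (simp add: Ustep_def layer_hom[OF cl])

lemma Upow_hom:
  assumes cl: "\<forall>i. clifford2 (G i)"
  shows "(Ustep G ^^ t) (smul P Q) = smul ((Ustep G ^^ t) P) ((Ustep G ^^ t) Q)"
  by (induction t) (simp_all add: Ustep_hom[OF cl])

lemma ga_II': "clifford2 C \<Longrightarrow> gate_act C (PI,PI) = (PI,PI)" by (rule ga_II)

lemma layer_supp1:
  assumes cl: "\<forall>i. clifford2 (G i)" and s: "sle P b"
  shows "sle (layer par G P) (b+1)"
  unfolding sle_def
proof (intro allI impI, rule ccontr)
  fix j assume ne: "layer par G P j \<noteq> PI" and gt: "\<not> j \<le> b + 1"
  have z: "P x = PI" if "x > b" for x using s that unfolding sle_def by force
  show False
  proof (cases "even (j - par)")
    case True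
    hence "layer par G P j = fst (gate_act (G j) (PI, PI))" using z gt by (simp add: layer_at)
    thus False using ne ga_II cl by simp
  next
    case False
    hence "layer par G P j = snd (gate_act (G (j-1)) (PI, PI))" using z gt by (simp add: layer_at)
    thus False using ne ga_II cl by simp
  qed
qed

lemma layer_supp0:
  assumes cl: "\<forall>i. clifford2 (G i)" and s: "sle P b" and ev: "even (b + 1 - par)"
  shows "sle (layer par G P) b"
  unfolding sle_def
proof (intro allI impI, rule ccontr)
  fix j assume ne: "layer par G P j \<noteq> PI" and gt: "\<not> j \<le> b"
  have z: "P x = PI" if "x > b" for x using s that unfolding sle_def by force
  show False
  proof (cases "even (j - par)")
    case True
    hence "layer par G P j = fst (gate_act (G j) (PI, PI))" using z gt by (simp add: layer_at)
    thus False using ne ga_II cl by simp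
  next
    case False
    hence "j \<noteq> b + 1" using ev by auto
    hence "j - 1 > b" using gt by simp
    hence "layer par G P j = snd (gate_act (G (j-1)) (PI, PI))" using z gt False by (simp add: layer_at)
    thus False using ne ga_II cl by simp
  qed
qed

lemma layer_fin:
  assumes cl: "\<forall>i. clifford2 (G i)" and f: "fin P"
  shows "fin (layer par G P)"
proof -
  let ?S = "{i. P i \<noteq> PI}"
  have "{j. layer par G P j \<noteq> PI} \<subseteq> ?S \<union> (\<lambda>x. x + 1) ` ?S \<union> (\<lambda>x. x - 1) ` ?S"
  proof
    fix j assume "j \<in> {j. layer par G P j \<noteq> PI}"
    hence ne: "layer par G P j \<noteq> PI" by simp
    show "j \<in> ?S \<union> (\<lambda>x. x + 1) ` ?S \<union> (\<lambda>x. x - 1) ` ?S"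
    proof (rule ccontr)
      assume "j \<notin> ?S \<union> (\<lambda>x. x + 1) ` ?S \<union> (\<lambda>x. x - 1) ` ?S"
      hence a: "P j = PI" and b: "P (j - 1) = PI" and c: "P (j+1) = PI"
        by (auto simp: image_iff)
      show False using ne a b c ga_II cl by (simp add: layer_at split: if_splits)
    qed
  qed
  moreover have "finite (?S \<union> (\<lambda>x. x + 1) ` ?S \<union> (\<lambda>x. x - 1) ` ?S)" using f fin_def by auto
  ultimately show ?thesis unfolding fin_def using finite_subset by blast
qed

lemma Ustep_fin: "\<forall>i. clifford2 (G i) \<Longrightarrow> fin P \<Longrightarrow> fin (Ustep G P)"
  by (simp add: Ustep_def layer_fin)

lemma smul_fin: "fin P \<Longrightarrow> fin Q \<Longrightarrow> fin (smul P Q)"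
proof -
  assume "fin P" "fin Q"
  moreover have "{i. smul P Q i \<noteq> PI} \<subseteq> {i. P i \<noteq> PI} \<union> {i. Q i \<noteq> PI}" by (auto simp: smul_def)
  ultimately show ?thesis unfolding fin_def using finite_subset by blast
qed

lemma left_wallD:
  assumes "left_wall G b c" "fin P" "sle P b" "t \<ge> 1" "j > c"
  shows "(Ustep G ^^ t) P j = PI"
  using assms unfolding left_wall_def fin_def sle_def by blast

lemma pmul_cancel2[simp]: "pmul x (pmul p x) = p" by (cases x; cases p; simp)

lemma funpow_pred: "t \<ge> 1 \<Longrightarrow> (f ^^ t) x = (f ^^ (t - 1)) (f x)"
  by (cases t) (simp_all add: funpow_swap1)

lemma pmul_ne: "pmul p q \<noteq> PI \<Longrightarrow> p \<noteq> PI \<or> q \<noteq> PI" by (cases p; cases q; simp)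

lemma wallA:
  assumes cl: "\<forall>i. clifford2 (G i)" and su: "\<forall>y. \<exists>p. snd (gate_act (G a) (p,PI)) = y"
    and W: "left_wall G a c" and ac: "a \<le> c"
  shows "left_wall G (a+1) c"
  unfolding left_wall_def
proof (intro allI impI)
  fix P :: "int \<Rightarrow> pauli" and t :: nat and j :: int
  assume fP0: "finite {i. P i \<noteq> PI}" and sP0: "\<forall>i. P i \<noteq> PI \<longrightarrow> i \<le> a + 1" and t: "1 \<le> t" and j: "c < j"
  have fP: "fin P" using fP0 fin_def by simp
  have sP: "sle P (a+1)" using sP0 sle_def by simp
  have PZ: "P i = PI" if "i > a + 1" for i using sP0 that by force
  let ?U = "Ustep G"
  have WD: "(?U ^^ s) Q j = PI" if "fin Q" "sle Q a" "s \<ge> 1" for Q s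
    using left_wallD[OF W that j] .
  show "(?U ^^ t) P j = PI"
  proof (cases "even a")
    case True
    obtain p where p: "snd (gate_act (G a) (p,PI)) = snd (gate_act (G a) (P a, P (a+1)))" using su by blast
    define X where "X = (\<lambda>i. if i < a then P i else if i = a then p else PI)"
    have sX: "sle X a" by (auto simp: sle_def X_def)
    have fX: "fin X"
    proof -
      have "{i. X i \<noteq> PI} \<subseteq> {i. P i \<noteq> PI} \<union> {a}" by (auto simp: X_def)
      thus ?thesis using fP0 fin_def finite_subset by auto
    qed
    define D where "D = layer 0 G (smul P X)"
    have sPX: "sle (smul P X) (a+1)" using sP sX unfolding sle_def smul_def
      by (metis pmul_ne add_increasing2 le_add_same_cancel1 zero_less_one less_imp_le order_trans)
    have sD1: "sle D (a+1)" unfolding D_def by (rule layer_supp0[OF cl sPX]) (use True in simp)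
    have "D (a+1) = snd (gate_act (G a) (pmul (P a) p, pmul (P (a+1)) PI))"
      using True by (simp add: D_def layer_at smul_def X_def)
    also have "\<dots> = PI" using ga_pair_hom[of "G a" "P a" p "P (a+1)" PI] cl p by (simp add: ppmul_def)
    finally have Da: "D (a+1) = PI" .
    have sD: "sle D a" using sD1 Da unfolding sle_def by (metis int_one_le_iff_zero_less order_le_less zless_imp_add1_zle linorder_not_le)
    define Y where "Y = layer 1 G D"
    have sY: "sle Y a" unfolding Y_def by (rule layer_supp0[OF cl sD]) (use True in simp)
    have fY: "fin Y" unfolding Y_def D_def using layer_fin cl smul_fin fP fX by metis
    have PX: "smul X (smul P X) = P" by (simp add: smul_def fun_eq_iff)
    have UP: "?U P = smul (?U X) Y"
    proof -
      have "?U P = layer 1 G (layer 0 G (smul X (smul P X)))" by (simp add: PX Ustep_def)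
      also have "\<dots> = smul (?U X) Y" by (simp add: layer_hom[OF cl] Ustep_def Y_def D_def)
      finally show ?thesis .
    qed
    have "(?U ^^ t) P = (?U ^^ (t-1)) (?U P)" using funpow_pred[OF t] .
    also have "\<dots> = smul ((?U ^^ t) X) ((?U ^^ (t-1)) Y)" using funpow_pred[OF t, of ?U X, symmetric]
      by (simp add: UP Upow_hom[OF cl])
    finally have e: "(?U ^^ t) P j = pmul ((?U ^^ t) X j) ((?U ^^ (t-1)) Y j)" by (simp add: smul_def)
    have 1: "(?U ^^ t) X j = PI" using WD[OF fX sX t] .
    have 2: "(?U ^^ (t-1)) Y j = PI"
    proof (cases "t - 1 = 0")
      case True thus ?thesis using sY j ac unfolding sle_def by force
    next
      case False thus ?thesis using WD[OF fY sY] by simp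
    qed
    show ?thesis using e 1 2 by simp
  next
    case False
    obtain p where p: "snd (gate_act (G a) (p,PI)) = P (a+1)" using su by blast
    obtain x where x: "gate_act (G (a-1)) x = (PI, p)" using ga_surj cl by (metis surjD)
    define X where "X = (\<lambda>i. if i = a - 1 then fst x else if i = a then snd x else PI)"
    have sX: "sle X a" by (auto simp: sle_def X_def)
    have fX: "fin X"
    proof -
      have "{i. X i \<noteq> PI} \<subseteq> {a-1, a}" by (auto simp: X_def)
      thus ?thesis using fin_def finite_subset by auto
    qed
    define E0 where "E0 = layer 0 G X"
    have sE0: "sle E0 a" unfolding E0_def by (rule layer_supp0[OF cl sX]) (use False in simp)
    have E0a: "E0 a = p" using False x by (simp add: E0_def layer_at X_def)
    have E0a1: "E0 (a+1) = PI" using sE0 unfolding sle_def by force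
    define UX where "UX = ?U X"
    have UXe: "UX = layer 1 G E0" by (simp add: UX_def Ustep_def E0_def)
    have UXa: "UX (a+1) = P (a+1)" using False E0a E0a1 p by (simp add: UXe layer_at)
    have sUX: "sle UX (a+1)" unfolding UXe by (rule layer_supp1[OF cl sE0])
    have fUX: "fin UX" unfolding UX_def using Ustep_fin cl fX by blast
    define R where "R = smul P UX"
    have sR: "sle R a" unfolding sle_def R_def smul_def
    proof (intro allI impI, rule ccontr)
      fix i assume ne: "pmul (P i) (UX i) \<noteq> PI" and "\<not> i \<le> a"
      hence "i = a + 1 \<or> i > a + 1" by auto
      thus False
      proof
        assume "i = a + 1" thus False using ne UXa by simp
      next
        assume "i > a + 1" thus False using ne PZ sUX unfolding sle_def by force
      qed
    qed
    have fR: "fin R" unfolding R_def using smul_fin fP fUX by blast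
    have PR: "P = smul R UX" by (simp add: R_def smul_def fun_eq_iff)
    have "(?U ^^ t) P = smul ((?U ^^ t) R) ((?U ^^ Suc t) X)"
      by (subst PR) (simp add: Upow_hom[OF cl] UX_def funpow_swap1)
    hence e: "(?U ^^ t) P j = pmul ((?U ^^ t) R j) ((?U ^^ Suc t) X j)" by (simp add: smul_def)
    show ?thesis using e WD[OF fR sR t] WD[OF fX sX, of "Suc t"] by simp
  qed
qed

lemma wallB:
  assumes cl: "\<forall>i. clifford2 (G i)" and inj0: "\<forall>p. p \<noteq> PI \<longrightarrow> snd (gate_act (G c) (p,PI)) \<noteq> PI"
    and W: "left_wall G a c" and ac: "a \<le> c"
  shows "left_wall G a (c - 1)"
  unfolding left_wall_def
proof (intro allI impI)
  fix P :: "int \<Rightarrow> pauli" and t :: nat and j :: int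
  assume fP0: "finite {i. P i \<noteq> PI}" and sP0: "\<forall>i. P i \<noteq> PI \<longrightarrow> i \<le> a" and t: "1 \<le> t" and j: "c - 1 < j"
  have fP: "fin P" using fP0 fin_def by simp
  have sP: "sle P a" using sP0 sle_def by simp
  let ?U = "Ustep G"
  have WD: "(?U ^^ s) P j' = PI" if "s \<ge> 1" "j' > c" for s j'
    using left_wallD[OF W fP sP that] .
  show "(?U ^^ t) P j = PI"
  proof (cases "j > c")
    case True thus ?thesis using WD t by blast
  next
    case False
    hence jc: "j = c" using j by simp
    define w where "w = (?U ^^ t) P"
    have sw: "sle w c" unfolding sle_def w_def using WD[OF t] by (meson not_le)
    show ?thesis
    proof (cases "even c")
      case True
      show ?thesis
      proof (rule ccontr)
        assume ne: "(?U ^^ t) P j \<noteq> PI"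
        hence wc: "w c \<noteq> PI" using jc w_def by simp
        define Ew where "Ew = layer 0 G w"
        have wc1: "w (c+1) = PI" using sw unfolding sle_def by force
        have Ew1: "Ew (c+1) = snd (gate_act (G c) (w c, PI))" using True wc1 by (simp add: Ew_def layer_at)
        hence Ew1ne: "Ew (c+1) \<noteq> PI" using inj0 wc by simp
        have sEw: "sle Ew (c+1)" unfolding Ew_def by (rule layer_supp1[OF cl sw])
        have Ew2: "Ew (c+2) = PI" using sEw unfolding sle_def by force
        have Uw: "?U w = layer 1 G Ew" by (simp add: Ew_def Ustep_def)
        have "?U w (c+1) = PI" "?U w (c+2) = PI"
          using WD[of "Suc t" "c+1"] WD[of "Suc t" "c+2"] by (simp_all add: w_def)
        hence "layer 1 G Ew (c+1) = PI" "layer 1 G Ew (c+2) = PI" by (simp_all add: Uw)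
        hence "fst (gate_act (G (c+1)) (Ew (c+1), PI)) = PI" "snd (gate_act (G (c+1)) (Ew (c+1), PI)) = PI"
          using True Ew2 by (simp_all add: layer_at add.commute)
        hence "gate_act (G (c+1)) (Ew (c+1), PI) = (PI,PI)" by (simp add: prod_eq_iff)
        hence "(Ew (c+1), PI) = (PI,PI)" using ga_zero cl by blast
        thus False using Ew1ne by simp
      qed
    next
      case False
      define v where "v = (?U ^^ (t-1)) P"
      have wv: "w = ?U v" using t by (cases t) (simp_all add: w_def v_def)
      have sv: "sle v c"
      proof (cases "t - 1 = 0")
        case True thus ?thesis using sP ac by (auto simp: v_def sle_def)
      next
        case False
        hence "t - 1 \<ge> 1" by simp
        thus ?thesis unfolding sle_def v_def using WD by (meson not_le)
      qed
      define Ev where "Ev = layer 0 G v"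
      have v1: "v (c+1) = PI" "v (c+2) = PI" using sv unfolding sle_def by force+
      have Ev1: "Ev (c+1) = PI" using False v1 ga_II cl by (simp add: Ev_def layer_at add.commute)
      have w_eq: "w = layer 1 G Ev" by (simp add: wv Ustep_def Ev_def)
      have wc1: "w (c+1) = PI" using sw unfolding sle_def by force
      hence "snd (gate_act (G c) (Ev c, PI)) = PI" using False Ev1 by (simp add: w_eq layer_at)
      hence "Ev c = PI" using inj0 by blast
      hence "w c = PI" using False Ev1 ga_II cl by (simp add: w_eq layer_at)
      thus ?thesis using jc w_def by simp
    qed
  qed
qed

lemma B_surj:
  assumes C: "clifford2 C" and nz: "\<forall>p. p \<noteq> PI \<longrightarrow> snd (gate_act C (p,PI)) \<noteq> PI"
  shows "\<forall>y. \<exists>p. snd (gate_act C (p,PI)) = y"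
proof -
  define B where "B p = snd (gate_act C (p,PI))" for p
  have "inj B"
  proof (rule injI)
    fix p1 p2 assume e: "B p1 = B p2"
    have "B (pmul p1 p2) = pmul (B p1) (B p2)"
      using ga_pair_hom[OF C, of p1 p2 PI PI] by (simp add: B_def ppmul_def)
    hence b0: "B (pmul p1 p2) = PI" using e by simp
    show "p1 = p2"
    proof (rule ccontr)
      assume "p1 \<noteq> p2"
      hence "pmul p1 p2 \<noteq> PI" by (simp add: pmul_eq_PI)
      hence "B (pmul p1 p2) \<noteq> PI" using nz unfolding B_def by simp
      thus False using b0 by simp
    qed
  qed
  hence sB: "surj B" using finite_UNIV_inj_surj[OF finite_pauli] by blast
  show ?thesis
  proof
    fix y obtain p where "y = B p" using surjD[OF sB] by blast
    thus "\<exists>p. snd (gate_act C (p,PI)) = y" by (auto simp: B_def)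
  qed
qed

theorem lemma7:
  fixes G :: "int \<Rightarrow> mat2" and a :: int and k :: nat
  assumes "\<forall>i. clifford2 (G i) \<and> \<not> product_class (G i)"
    and "k \<ge> 1"
    and "irreducible_left_wall G a k"
  shows "CZ_class (G a) \<and> CZ_class (G (a + int k))"
proof -
  have cl: "\<forall>i. clifford2 (G i)" and npc: "\<And>i. \<not> product_class (G i)" using assms(1) by auto
  have W0: "left_wall G a (a + int k)" using assms(3) irreducible_left_wall_def by blast
  have irr: "\<not> left_wall G b c" if "a \<le> b" "b \<le> c" "c \<le> a + int k" "(b, c) \<noteq> (a, a + int k)" for b c
    using assms(3) that unfolding irreducible_left_wall_def by blast
  have nz: "\<forall>p. p \<noteq> PI \<longrightarrow> snd (gate_act (G i) (p,PI)) \<noteq> PI" if "\<not> CZ_class (G i)" for i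
  proof (intro allI impI)
    fix p assume p: "p \<noteq> PI"
    show "snd (gate_act (G i) (p,PI)) \<noteq> PI"
    proof
      assume "snd (gate_act (G i) (p,PI)) = PI"
      hence "CZ_class (G i)" using classify[of "G i" p] cl npc p by blast
      thus False using that by blast
    qed
  qed
  have 1: "CZ_class (G a)"
  proof (rule ccontr)
    assume "\<not> CZ_class (G a)"
    hence "\<forall>y. \<exists>p. snd (gate_act (G a) (p,PI)) = y" using B_surj[OF cl[rule_format] nz] by blast
    hence "left_wall G (a+1) (a + int k)" using wallA[OF cl _ W0] by simp
    moreover have "\<not> left_wall G (a+1) (a + int k)" using assms(2) by (intro irr) auto
    ultimately show False by blast
  qed
  have 2: "CZ_class (G (a + int k))"
  proof (rule ccontr)
    assume "\<not> CZ_class (G (a + int k))"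
    hence "left_wall G a (a + int k - 1)" using wallB[OF cl nz W0] by simp
    moreover have "\<not> left_wall G a (a + int k - 1)" using assms(2) by (intro irr) auto
    ultimately show False by blast
  qed
  show ?thesis using 1 2 by blast
qed

end
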